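(* In the standing setting, assume (A1), (A3), (A4) and (A7), and consider the coupled chains. Then there exist $h_0>0$ and $C>0$, independent of $s,h,k$, such that for all $s\in\mathbb N_+$, $h\in(0,h_0)$ and all even $k\ge2$, $$\mathbb E|\bar X^{f,c}_k-X^c_k|^4\le C\frac{h^2}{s^2}.$$
   Context: Standing setting. Let $d,n\in\mathbb N_+$, $\beta\ge0$, and let $a:\mathbb R^d\to\mathbb R^d$, $b:\mathbb R^d\times\mathbb R^n\to\mathbb R^d$ be measurable. $|\cdot|$ is the Euclidean norm (Frobenius norm for matrices), $\nabla$ the Jacobian in $x$, $D^\alpha$ the partial derivative in $x$ for a multi-index $\alpha$. For each $s\in\mathbb N_+$ a law on $\mathbb R^n$ is given; a random variable with this law is a drift variable at level $s$ (generically $U^s$), and $\mathbb E[b(x,U^s)]=a(x)$ for all $x$. All constants below are independent of $s,x,y$. (A1) $|a(x)-a(y)|\le L|x-y|$; $\langle x-y,a(x)-a(y)\rangle\le-K|x-y|^2$ with $K>0$; $a\in C^2$ with $|D^\alpha a|\le C_{a^{(|\alpha|)}}$ for $|\alpha|=1,2$. (A2) $\mathbb E|b(x,U^s)-b(y,U^s)|^2\le\bar L^2|x-y|^2$. (A3) $\mathbb E|b(x,U^s)-a(x)|^2\le\sigma_s^2(1+|x|^2)$ with $\sigma_s^2\le\kappa/s$. (A4) $\mathbb E|b(x,U^s)-a(x)|^4\le\sigma^{(4)}_s(1+|x|^4)$ with $\sigma^{(4)}_s\le\kappa/s^2$. (A5) for every $u$, $x\mapsto b(x,u)$ is $C^2$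 with $|D^\alpha b(x,u)|\le C_{b^{(2)}}$ for $|\alpha|=2$, and $\mathbb E|\nabla b(x,U^s)-\nabla a(x)|^4\le\sigma^{(4)}_s(1+|x|^4)$. (A6) $\mathbb E[D^\alpha b(x,U^s)]=D^\alpha a(x)$ for $|\alpha|\le2$. (A7) $|a(x)|^4\le L_0^{(4)}(1+|x|^4)$. (A8) every drift variable $U^{2s}$ at level $2s$ determines (measurably) two drift variables $U^{2s,1},U^{2s,2}$ at level $s$ with $b(x,U^{2s})=\frac12b(x,U^{2s,1})+\frac12b(x,U^{2s,2})$ for all $x$. Coupled chains. Fix $s\in\mathbb N_+$, $h>0$. Let $(Z_k)_{k\ge1}$ be i.i.d. $N(0,I_d)$, $(U^f_k)_{k\ge0}$ i.i.d. drift variables at level $2s$, and $X_0$ an $\mathbb R^d$-valued random variable with $\mathbb E|X_0|^4<\infty$, all independent; let $U^{f,1}_k,U^{f,2}_k$ be the level-$s$ variables given by (A8). Put $V^f_k=U^f_k$, $V^{c-}_k=U^{f,1}_k$, $V^{c+}_k=U^{f,2}_k$. For $j\in\{f,c-,c+\}$, all chains start at $X_0$: $X^{j,f}_{k+1}=X^{j,f}_k+hb(X^{j,f}_k,V^j_k)+\beta\sqrt hZ_{k+1}$ ($k\ge0$); for even $k\ge0$: $X^{j,c-}_{k+2}=X^{j,c-}_k+2hb(X^{j,c-}_k,V^j_k)+\beta\sqrt h(Z_{k+1}+Z_{k+2})$, $X^{j,c+}_{k+2}=X^{j,c+}_k+2hb(X^{j,c+}_k,V^j_{k+1})+\beta\sqrt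 h(Z_{k+1}+Z_{k+2})$. Exact-drift chains from $X_0$: $X_{k+1}=X_k+ha(X_k)+\beta\sqrt hZ_{k+1}$ and, for even $k$, $X^c_{k+2}=X^c_k+2ha(X^c_k)+\beta\sqrt h(Z_{k+1}+Z_{k+2})$. Averages: $\bar X^{j,c}_k=\frac12(X^{j,c-}_k+X^{j,c+}_k)$, $\bar X^{c,f}_k=\frac12(X^{c-,f}_k+X^{c+,f}_k)$. *)

theory Defs
  imports "HOL-Probability.Probability"
begin

definition std_gauss_vec :: "(real^'d) measure" where
  "std_gauss_vec = distr (PiM (UNIV::'d set) (\<lambda>_. density lborel std_normal_density))
                         borel (\<lambda>f. \<chi> i. f i)"

definition C2_bounded :: "(real^'d \<Rightarrow> real^'d) \<Rightarrow> real \<Rightarrow> real \<Rightarrow> bool" where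
  "C2_bounded f C1 C2 \<longleftrightarrow>
     (\<exists>Df D2f. (\<forall>x. (f has_derivative Df x) (at x)) \<and>
       (\<forall>x i. ((\<lambda>y. Df y (axis i 1)) has_derivative D2f x i) (at x)) \<and>
       (\<forall>i j. continuous_on UNIV (\<lambda>x. D2f x i (axis j 1))) \<and>
       (\<forall>x i. norm (Df x (axis i 1)) \<le> C1) \<and>
       (\<forall>x i j. norm (D2f x i (axis j 1)) \<le> C2))"

text \<open>Generic coarse chain with step 2h, evaluated at even times 2m:
  Y_0 = x0,  Y_{2m+2} = Y_{2m} + 2h F (Y_{2m}) (2m) + beta sqrt h (Z_{2m+1} + Z_{2m+2}).
  Here F y k is the drift used at (even) time k.\<close>
fun coarse_chain :: "real \<Rightarrow> real \<Rightarrow> (real^'d \<Rightarrow> nat \<Rightarrow> real^'d) \<Rightarrow> real^'d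
      \<Rightarrow> (nat \<Rightarrow> real^'d) \<Rightarrow> nat \<Rightarrow> real^'d" where
  "coarse_chain \<beta> h F x0 z 0 = x0"
| "coarse_chain \<beta> h F x0 z (Suc m) =
     coarse_chain \<beta> h F x0 z m
     + (2 * h) *\<^sub>R F (coarse_chain \<beta> h F x0 z m) (2 * m)
     + (\<beta> * sqrt h) *\<^sub>R (z (2 * m + 1) + z (2 * m + 2))"

text \<open>Canonical probability space for the coupled chains at level s:
  omega = (X_0, (Z, U^f)) with X_0 ~ nu, Z_k iid N(0,I_d) (Z_0 unused), U^f_k iid with law Q (2s).\<close>
definition coupled_space :: "(real^'d) measure \<Rightarrow> (nat \<Rightarrow> (real^'n) measure) \<Rightarrow> nat
      \<Rightarrow> ((real^'d) \<times> (nat \<Rightarrow> real^'d) \<times> (nat \<Rightarrow> real^'n)) measure" where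
  "coupled_space \<nu> Q s = \<nu> \<Otimes>\<^sub>M (PiM UNIV (\<lambda>_. std_gauss_vec) \<Otimes>\<^sub>M PiM UNIV (\<lambda>_. Q (2 * s)))"

definition Xfcm :: "real \<Rightarrow> real \<Rightarrow> (real^'d \<Rightarrow> real^'n \<Rightarrow> real^'d) \<Rightarrow> nat
      \<Rightarrow> (real^'d) \<times> (nat \<Rightarrow> real^'d) \<times> (nat \<Rightarrow> real^'n) \<Rightarrow> real^'d" where
  "Xfcm \<beta> h b k \<omega> = (case \<omega> of (x0, z, u) \<Rightarrow>
      coarse_chain \<beta> h (\<lambda>y j. b y (u j)) x0 z (k div 2))"

definition Xfcp :: "real \<Rightarrow> real \<Rightarrow> (real^'d \<Rightarrow> real^'n \<Rightarrow> real^'d) \<Rightarrow> nat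
      \<Rightarrow> (real^'d) \<times> (nat \<Rightarrow> real^'d) \<times> (nat \<Rightarrow> real^'n) \<Rightarrow> real^'d" where
  "Xfcp \<beta> h b k \<omega> = (case \<omega> of (x0, z, u) \<Rightarrow>
      coarse_chain \<beta> h (\<lambda>y j. b y (u (j + 1))) x0 z (k div 2))"

definition Xbar_fc :: "real \<Rightarrow> real \<Rightarrow> (real^'d \<Rightarrow> real^'n \<Rightarrow> real^'d) \<Rightarrow> nat
      \<Rightarrow> (real^'d) \<times> (nat \<Rightarrow> real^'d) \<times> (nat \<Rightarrow> real^'n) \<Rightarrow> real^'d" where
  "Xbar_fc \<beta> h b k \<omega> = (1/2) *\<^sub>R (Xfcm \<beta> h b k \<omega> + Xfcp \<beta> h b k \<omega>)"

definition Xc :: "real \<Rightarrow> real \<Rightarrow> (real^'d \<Rightarrow> real^'d) \<Rightarrow> nat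
      \<Rightarrow> (real^'d) \<times> (nat \<Rightarrow> real^'d) \<times> (nat \<Rightarrow> real^'n) \<Rightarrow> real^'d" where
  "Xc \<beta> h a k \<omega> = (case \<omega> of (x0, z, u) \<Rightarrow>
      coarse_chain \<beta> h (\<lambda>y j. a y) x0 z (k div 2))"

end

theory Submission
  imports Defs
begin


definition upd_inv :: "'a measure \<Rightarrow> 'b measure \<Rightarrow> ('a \<Rightarrow> 'b \<Rightarrow> 'a) \<Rightarrow> bool" where
  "upd_inv N P T \<longleftrightarrow> (\<lambda>(y,p). T y p) \<in> measurable (N \<Otimes>\<^sub>M P) N \<and>
     (\<forall>G \<in> borel_measurable N. (\<integral>\<^sup>+y. G y \<partial>N) = (\<integral>\<^sup>+y. \<integral>\<^sup>+p. G (T y p) \<partial>P \<partial>N))"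

lemma upd_inv_PiM:
  assumes R: "prob_space R"
  shows "upd_inv (PiM (UNIV::'i set) (\<lambda>_. R)) R (\<lambda>X v. X(i:=v))"
proof -
  let ?P = "PiM (UNIV::'i set) (\<lambda>_. R)"
  interpret R: prob_space R by fact
  interpret P: prob_space ?P by (intro prob_space_PiM R)
  interpret RP: pair_sigma_finite R ?P by unfold_locales
  have eq: "distr (R \<Otimes>\<^sub>M ?P) ?P (\<lambda>(x, X). X(i := x)) = ?P"
    using distr_pair_PiM_eq_PiM[of UNIV "\<lambda>_. R" i] R by simp
  have m: "(\<lambda>(x, X). X(i := x)) \<in> measurable (R \<Otimes>\<^sub>M ?P) ?P"
    unfolding case_prod_beta by (rule measurable_fun_upd[where J=UNIV]) auto
  have m2: "(\<lambda>(X, x). X(i := x)) \<in> measurable (?P \<Otimes>\<^sub>M R) ?P"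
    using measurable_add_dim[where I=UNIV and M="\<lambda>_. R" and i=i] by simp
  show ?thesis unfolding upd_inv_def
  proof (intro conjI ballI m2)
    fix G :: "_ \<Rightarrow> ennreal" assume G: "G \<in> borel_measurable ?P"
    have "(\<integral>\<^sup>+y. G y \<partial>?P) = (\<integral>\<^sup>+y. G y \<partial>distr (R \<Otimes>\<^sub>M ?P) ?P (\<lambda>(x, X). X(i := x)))"
      by (simp add: eq)
    also have "\<dots> = (\<integral>\<^sup>+z. G (case z of (x, X) \<Rightarrow> X(i := x)) \<partial>(R \<Otimes>\<^sub>M ?P))"
      using G m by (simp add: nn_integral_distr)
    also have "\<dots> = (\<integral>\<^sup>+X. \<integral>\<^sup>+x. G (X(i := x)) \<partial>R \<partial>?P)"
      using G m by (subst RP.nn_integral_snd[symmetric]) (auto simp: case_prod_beta)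
    finally show "(\<integral>\<^sup>+y. G y \<partial>?P) = (\<integral>\<^sup>+X. \<integral>\<^sup>+x. G (X(i := x)) \<partial>R \<partial>?P)" .
  qed
qed

lemma upd_inv_right:
  assumes M: "sigma_finite_measure M" and N: "sigma_finite_measure N" and P: "sigma_finite_measure P"
    and inv: "upd_inv N P T"
  shows "upd_inv (M \<Otimes>\<^sub>M N) P (\<lambda>(x,y) p. (x, T y p))"
proof -
  interpret M: sigma_finite_measure M by fact
  interpret N: sigma_finite_measure N by fact
  interpret P: sigma_finite_measure P by fact
  have Tm: "(\<lambda>(y,p). T y p) \<in> measurable (N \<Otimes>\<^sub>M P) N"
    using inv by (simp add: upd_inv_def)
  have m: "(\<lambda>(w, p). case w of (x, y) \<Rightarrow> (x, T y p)) \<in> measurable ((M \<Otimes>\<^sub>M N) \<Otimes>\<^sub>M P) (M \<Otimes>\<^sub>M N)"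
  proof -
    have "(\<lambda>(w, p). case w of (x, y) \<Rightarrow> (x, T y p)) = (\<lambda>q. (fst (fst q), (\<lambda>(y,p). T y p) (snd (fst q), snd q)))"
      by (auto simp: fun_eq_iff split: prod.splits)
    also have "\<dots> \<in> measurable ((M \<Otimes>\<^sub>M N) \<Otimes>\<^sub>M P) (M \<Otimes>\<^sub>M N)"
    proof (rule measurable_Pair)
      show "(\<lambda>q. fst (fst q)) \<in> measurable ((M \<Otimes>\<^sub>M N) \<Otimes>\<^sub>M P) M" by simp
      have "(\<lambda>q. (snd (fst q), snd q)) \<in> measurable ((M \<Otimes>\<^sub>M N) \<Otimes>\<^sub>M P) (N \<Otimes>\<^sub>M P)"
        by (intro measurable_Pair) simp_all
      from measurable_comp[OF this Tm]
      show "(\<lambda>q. (\<lambda>(y,p). T y p) (snd (fst q), snd q)) \<in> measurable ((M \<Otimes>\<^sub>M N) \<Otimes>\<^sub>M P) N"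
        by (simp add: o_def)
    qed
    finally show ?thesis .
  qed
  show ?thesis unfolding upd_inv_def
  proof (intro conjI ballI)
    show "(\<lambda>(y, p). (\<lambda>(x,y) p. (x, T y p)) y p) \<in> measurable ((M \<Otimes>\<^sub>M N) \<Otimes>\<^sub>M P) (M \<Otimes>\<^sub>M N)"
      using m by (simp add: case_prod_unfold)
  next
    fix G :: "_ \<Rightarrow> ennreal" assume G[measurable]: "G \<in> borel_measurable (M \<Otimes>\<^sub>M N)"
    have "(\<integral>\<^sup>+w. G w \<partial>(M \<Otimes>\<^sub>M N)) = (\<integral>\<^sup>+x. \<integral>\<^sup>+y. G (x,y) \<partial>N \<partial>M)"
      by (rule N.nn_integral_fst[symmetric]) simp
    also have "\<dots> = (\<integral>\<^sup>+x. \<integral>\<^sup>+y. \<integral>\<^sup>+p. G (x, T y p) \<partial>P \<partial>N \<partial>M)"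
    proof (rule nn_integral_cong)
      fix x assume x: "x \<in> space M"
      have "(\<lambda>y. G (x, y)) \<in> borel_measurable N" using x G by simp
      then show "(\<integral>\<^sup>+y. G (x,y) \<partial>N) = (\<integral>\<^sup>+y. \<integral>\<^sup>+p. G (x, T y p) \<partial>P \<partial>N)"
        using inv by (simp add: upd_inv_def)
    qed
    also have "\<dots> = (\<integral>\<^sup>+w. (\<lambda>(x,y). \<integral>\<^sup>+p. G (x, T y p) \<partial>P) w \<partial>(M \<Otimes>\<^sub>M N))"
    proof -
      have "(\<lambda>(w, p). G (case w of (x, y) \<Rightarrow> (x, T y p))) \<in> borel_measurable ((M \<Otimes>\<^sub>M N) \<Otimes>\<^sub>M P)"
        using measurable_comp[OF m G] by (simp add: o_def case_prod_beta)
      then have "(\<lambda>w. \<integral>\<^sup>+p. G (case w of (x, y) \<Rightarrow> (x, T y p)) \<partial>P) \<in> borel_measurable (M \<Otimes>\<^sub>M N)"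
        by (rule P.borel_measurable_nn_integral)
      then have mm: "(\<lambda>(x,y). \<integral>\<^sup>+p. G (x, T y p) \<partial>P) \<in> borel_measurable (M \<Otimes>\<^sub>M N)"
        by (simp add: case_prod_beta)
      show ?thesis using N.nn_integral_fst[OF mm] by simp
    qed
    finally show "(\<integral>\<^sup>+w. G w \<partial>(M \<Otimes>\<^sub>M N)) = (\<integral>\<^sup>+w. \<integral>\<^sup>+p. G ((\<lambda>(x,y) p. (x, T y p)) w p) \<partial>P \<partial>(M \<Otimes>\<^sub>M N))"
      by (simp add: case_prod_beta)
  qed
qed


lemma upd_inv_left:
  assumes M: "sigma_finite_measure M" and N: "sigma_finite_measure N" and P: "sigma_finite_measure P"
    and inv: "upd_inv M P T"
  shows "upd_inv (M \<Otimes>\<^sub>M N) P (\<lambda>(x,y) p. (T x p, y))"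
proof -
  interpret M: sigma_finite_measure M by fact
  interpret N: sigma_finite_measure N by fact
  interpret P: sigma_finite_measure P by fact
  interpret MN: pair_sigma_finite M N by unfold_locales
  have Tm: "(\<lambda>(y,p). T y p) \<in> measurable (M \<Otimes>\<^sub>M P) M"
    using inv by (simp add: upd_inv_def)
  have m: "(\<lambda>(w, p). case w of (x, y) \<Rightarrow> (T x p, y)) \<in> measurable ((M \<Otimes>\<^sub>M N) \<Otimes>\<^sub>M P) (M \<Otimes>\<^sub>M N)"
  proof -
    have "(\<lambda>(w, p). case w of (x, y) \<Rightarrow> (T x p, y)) = (\<lambda>q. ((\<lambda>(y,p). T y p) (fst (fst q), snd q), snd (fst q)))"
      by (auto simp: fun_eq_iff split: prod.splits)
    also have "\<dots> \<in> measurable ((M \<Otimes>\<^sub>M N) \<Otimes>\<^sub>M P) (M \<Otimes>\<^sub>M N)"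
    proof (rule measurable_Pair)
      show "(\<lambda>q. snd (fst q)) \<in> measurable ((M \<Otimes>\<^sub>M N) \<Otimes>\<^sub>M P) N" by simp
      have "(\<lambda>q. (fst (fst q), snd q)) \<in> measurable ((M \<Otimes>\<^sub>M N) \<Otimes>\<^sub>M P) (M \<Otimes>\<^sub>M P)"
        by (intro measurable_Pair) simp_all
      from measurable_comp[OF this Tm]
      show "(\<lambda>q. (\<lambda>(y,p). T y p) (fst (fst q), snd q)) \<in> measurable ((M \<Otimes>\<^sub>M N) \<Otimes>\<^sub>M P) M"
        by (simp add: o_def)
    qed
    finally show ?thesis .
  qed
  show ?thesis unfolding upd_inv_def
  proof (intro conjI ballI)
    show "(\<lambda>(y, p). (\<lambda>(x,y) p. (T x p, y)) y p) \<in> measurable ((M \<Otimes>\<^sub>M N) \<Otimes>\<^sub>M P) (M \<Otimes>\<^sub>M N)"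
      using m by (simp add: case_prod_unfold)
  next
    fix G :: "_ \<Rightarrow> ennreal" assume G[measurable]: "G \<in> borel_measurable (M \<Otimes>\<^sub>M N)"
    have "(\<integral>\<^sup>+w. G w \<partial>(M \<Otimes>\<^sub>M N)) = (\<integral>\<^sup>+y. \<integral>\<^sup>+x. G (x,y) \<partial>M \<partial>N)"
      by (rule MN.nn_integral_snd[symmetric]) simp
    also have "\<dots> = (\<integral>\<^sup>+y. \<integral>\<^sup>+x. \<integral>\<^sup>+p. G (T x p, y) \<partial>P \<partial>M \<partial>N)"
    proof (rule nn_integral_cong)
      fix y assume y: "y \<in> space N"
      have "(\<lambda>x. G (x, y)) \<in> borel_measurable M" using y G by simp
      then show "(\<integral>\<^sup>+x. G (x,y) \<partial>M) = (\<integral>\<^sup>+x. \<integral>\<^sup>+p. G (T x p, y) \<partial>P \<partial>M)"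
        using inv by (simp add: upd_inv_def)
    qed
    also have "\<dots> = (\<integral>\<^sup>+w. (\<lambda>(x,y). \<integral>\<^sup>+p. G (T x p, y) \<partial>P) w \<partial>(M \<Otimes>\<^sub>M N))"
    proof -
      have "(\<lambda>(w, p). G (case w of (x, y) \<Rightarrow> (T x p, y))) \<in> borel_measurable ((M \<Otimes>\<^sub>M N) \<Otimes>\<^sub>M P)"
        using measurable_comp[OF m G] by (simp add: o_def case_prod_beta)
      then have "(\<lambda>w. \<integral>\<^sup>+p. G (case w of (x, y) \<Rightarrow> (T x p, y)) \<partial>P) \<in> borel_measurable (M \<Otimes>\<^sub>M N)"
        by (rule P.borel_measurable_nn_integral)
      then have mm: "(\<lambda>(x,y). \<integral>\<^sup>+p. G (T x p, y) \<partial>P) \<in> borel_measurable (M \<Otimes>\<^sub>M N)"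
        by (simp add: case_prod_beta)
      show ?thesis using MN.nn_integral_snd[OF mm] by simp
    qed
    finally show "(\<integral>\<^sup>+w. G w \<partial>(M \<Otimes>\<^sub>M N)) = (\<integral>\<^sup>+w. \<integral>\<^sup>+p. G ((\<lambda>(x,y) p. (T x p, y)) w p) \<partial>P \<partial>(M \<Otimes>\<^sub>M N))"
      by (simp add: case_prod_beta)
  qed
qed



lemma quart_bound:
  fixes D v :: "'a::real_inner" and c :: real
  shows "norm (D + c *\<^sub>R v)^4 \<le> norm D^4 + 4*c*norm D^2*(D \<bullet> v) + 8*c^2*norm D^2*norm v^2 + 3*c^4*norm v^4"
proof -
  define p where "p = norm D^2"
  define q where "q = D \<bullet> v"
  define r where "r = norm v^2"
  have sq: "norm (D + c *\<^sub>R v)^2 = p + 2*c*q + c^2*r"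
    unfolding p_def q_def r_def power2_norm_eq_inner
    by (simp add: inner_add_left inner_add_right inner_commute algebra_simps power2_eq_square)
  have cs: "q^2 \<le> p*r"
  proof -
    have "\<bar>q\<bar> \<le> norm D * norm v" unfolding q_def by (rule Cauchy_Schwarz_ineq2)
    then have "q^2 \<le> (norm D * norm v)^2"
      by (metis abs_ge_zero abs_le_square_iff abs_of_nonneg norm_ge_zero zero_le_mult_iff)
    then show ?thesis unfolding p_def r_def by (simp add: power_mult_distrib)
  qed
  have h1: "0 \<le> 2*c^2*q^2 - 4*c^3*q*r + 2*c^4*r^2"
  proof -
    have "2*c^2*q^2 - 4*c^3*q*r + 2*c^4*r^2 = 2*(c*q - c^2*r)^2"
      by (simp add: power2_eq_square algebra_simps power_def)
    then show ?thesis by simp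
  qed
  have h2: "0 \<le> c^2*(p*r - q^2)" using cs by simp
  have "norm (D + c *\<^sub>R v)^4 = (p + 2*c*q + c^2*r)^2"
    using sq by (metis power_mult numeral_Bit0 numeral_One mult_2 one_add_one)
  also have "\<dots> = p^2 + 4*c*p*q + 8*c^2*p*r + 3*c^4*r^2 - (2*c^2*q^2 - 4*c^3*q*r + 2*c^4*r^2) - 6*(c^2*(p*r - q^2))"
    by (simp add: power2_eq_square algebra_simps power_def)
  also have "\<dots> \<le> p^2 + 4*c*p*q + 8*c^2*p*r + 3*c^4*r^2"
    using h1 h2 by linarith
  also have "\<dots> = norm D^4 + 4*c*norm D^2*(D \<bullet> v) + 8*c^2*norm D^2*norm v^2 + 3*c^4*norm v^4"
    unfolding p_def q_def r_def by (simp add: power_mult[symmetric] mult.assoc)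
  finally show ?thesis .
qed

lemma sq_eq:
  fixes D v :: "'a::real_inner" and c :: real
  shows "norm (D + c *\<^sub>R v)^2 = norm D^2 + 2*c*(D \<bullet> v) + c^2*norm v^2"
  unfolding power2_norm_eq_inner
  by (simp add: inner_add_left inner_add_right inner_commute algebra_simps power2_eq_square)


lemma nn_le_integrable:
  fixes f :: "'a \<Rightarrow> real"
  assumes f: "f \<in> borel_measurable M" and nn: "\<And>x. 0 \<le> f x"
    and le: "(\<integral>\<^sup>+x. ennreal (f x) \<partial>M) \<le> ennreal m" and m: "0 \<le> m"
  shows "integrable M f" "integral\<^sup>L M f \<le> m"
proof -
  show i: "integrable M f"
    using f le nn by (intro integrableI_bounded) (auto simp: top_unique intro: le_less_trans[OF le])
  have "ennreal (integral\<^sup>L M f) = (\<integral>\<^sup>+x. ennreal (f x) \<partial>M)"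
    using i nn by (subst nn_integral_eq_integral) auto
  with le m show "integral\<^sup>L M f \<le> m"
    by (metis ennreal_le_iff)
qed

lemma moment_step:
  fixes v :: "'a \<Rightarrow> 'b::euclidean_space" and D :: 'b and c m2 m4 :: real
  assumes P: "prob_space P"
    and vm: "v \<in> borel_measurable P"
    and mean: "\<And>A. integrable P (\<lambda>w. A \<bullet> v w) \<and> (\<integral>w. A \<bullet> v w \<partial>P) = 0"
    and b2: "(\<integral>\<^sup>+w. ennreal (norm (v w)^2) \<partial>P) \<le> ennreal m2" and m2: "0 \<le> m2"
    and b4: "(\<integral>\<^sup>+w. ennreal (norm (v w)^4) \<partial>P) \<le> ennreal m4" and m4: "0 \<le> m4"
  shows "(\<integral>\<^sup>+w. ennreal (norm (D + c *\<^sub>R v w)^4) \<partial>P) \<le> ennreal (norm D^4 + 8*c^2*norm D^2*m2 + 3*c^4*m4)"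
    and "(\<integral>\<^sup>+w. ennreal (norm (D + c *\<^sub>R v w)^2) \<partial>P) \<le> ennreal (norm D^2 + c^2*m2)"
proof -
  interpret P: prob_space P by fact
  have vm2: "(\<lambda>w. norm (v w)^2) \<in> borel_measurable P" using vm by measurable
  have vm4: "(\<lambda>w. norm (v w)^4) \<in> borel_measurable P" using vm by measurable
  note I2 = nn_le_integrable[OF vm2 _ b2 m2, simplified]
  note I4 = nn_le_integrable[OF vm4 _ b4 m4, simplified]
  have iD: "integrable P (\<lambda>w. D \<bullet> v w)" and eD: "(\<integral>w. D \<bullet> v w \<partial>P) = 0" using mean by auto
  define g where "g w = norm D^4 + 4*c*norm D^2*(D \<bullet> v w) + 8*c^2*norm D^2*norm (v w)^2 + 3*c^4*norm (v w)^4" for w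
  have ig: "integrable P g" unfolding g_def
    using iD I2(1) I4(1) by (intro Bochner_Integration.integrable_add integrable_mult_right) auto
  have intg: "integral\<^sup>L P g = norm D^4 + 8*c^2*norm D^2*(\<integral>w. norm (v w)^2 \<partial>P) + 3*c^4*(\<integral>w. norm (v w)^4 \<partial>P)"
    unfolding g_def using iD eD I2(1) I4(1)
    by (simp add: Bochner_Integration.integral_add integral_mult_right_zero P.prob_space)
  have gle: "norm (D + c *\<^sub>R v w)^4 \<le> g w" for w unfolding g_def by (rule quart_bound)
  have "(\<integral>\<^sup>+w. ennreal (norm (D + c *\<^sub>R v w)^4) \<partial>P) \<le> (\<integral>\<^sup>+w. ennreal (g w) \<partial>P)"
    by (intro nn_integral_mono ennreal_leI gle)
  also have "\<dots> = ennreal (integral\<^sup>L P g)"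
  proof -
    have "0 \<le> g w" for w using gle[of w] by (meson norm_ge_zero order_trans zero_le_power)
    then show ?thesis using ig by (subst nn_integral_eq_integral) auto
  qed
  also have "\<dots> \<le> ennreal (norm D^4 + 8*c^2*norm D^2*m2 + 3*c^4*m4)"
    unfolding intg using I2(2) I4(2)
    by (intro ennreal_leI add_mono mult_left_mono order_refl) auto
  finally show "(\<integral>\<^sup>+w. ennreal (norm (D + c *\<^sub>R v w)^4) \<partial>P) \<le> ennreal (norm D^4 + 8*c^2*norm D^2*m2 + 3*c^4*m4)" .
  define g2 where "g2 w = norm D^2 + 2*c*(D \<bullet> v w) + c^2*norm (v w)^2" for w
  have ig2: "integrable P g2" unfolding g2_def
    using iD I2(1) by (intro Bochner_Integration.integrable_add integrable_mult_right) auto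
  have intg2: "integral\<^sup>L P g2 = norm D^2 + c^2*(\<integral>w. norm (v w)^2 \<partial>P)"
    unfolding g2_def using iD eD I2(1)
    by (simp add: Bochner_Integration.integral_add integral_mult_right_zero P.prob_space)
  have g2e: "norm (D + c *\<^sub>R v w)^2 = g2 w" for w unfolding g2_def by (rule sq_eq)
  have "(\<integral>\<^sup>+w. ennreal (norm (D + c *\<^sub>R v w)^2) \<partial>P) = (\<integral>\<^sup>+w. ennreal (g2 w) \<partial>P)"
    by (simp add: g2e)
  also have "\<dots> = ennreal (integral\<^sup>L P g2)"
    using ig2 g2e by (subst nn_integral_eq_integral) (auto simp: g2e[symmetric])
  also have "\<dots> \<le> ennreal (norm D^2 + c^2*m2)"
    unfolding intg2 using I2(2)
    by (intro ennreal_leI add_mono mult_left_mono order_refl) auto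
  finally show "(\<integral>\<^sup>+w. ennreal (norm (D + c *\<^sub>R v w)^2) \<partial>P) \<le> ennreal (norm D^2 + c^2*m2)" .
qed



abbreviation "SN \<equiv> density lborel std_normal_density"

lemma SN_prob: "prob_space SN"
  by (rule prob_space_normal_density) simp

lemma SN_mean: "integrable SN (\<lambda>x. x)" "(\<integral>x. x \<partial>SN) = 0"
proof -
  have "integrable lborel (\<lambda>x. std_normal_density x * x^1)"
    by (rule integrable_std_normal_moment)
  then show "integrable SN (\<lambda>x. x)"
    by (subst integrable_density) auto
  have "(\<integral>x. x \<partial>SN) = (\<integral>x. std_normal_density x * x^(2*0+1) \<partial>lborel)"
    by (subst integral_density) auto
  also have "\<dots> = 0" by (rule integral_std_normal_moment_odd)
  finally show "(\<integral>x. x \<partial>SN) = 0" .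
qed

lemma SN_moment_even: "(\<integral>\<^sup>+x. ennreal (x^(2*k)) \<partial>SN) = ennreal (fact (2 * k) / (2^k * fact k))"
proof -
  have "(\<integral>\<^sup>+x. ennreal (x^(2*k)) \<partial>SN) = (\<integral>\<^sup>+x. ennreal (std_normal_density x) * ennreal (x^(2*k)) \<partial>lborel)"
    by (subst nn_integral_density) auto
  also have "\<dots> = (\<integral>\<^sup>+x. ennreal (std_normal_density x * x^(2*k)) \<partial>lborel)"
    by (intro nn_integral_cong) (simp add: ennreal_mult)
  also have "\<dots> = ennreal (\<integral>x. std_normal_density x * x^(2*k) \<partial>lborel)"
    using integrable_std_normal_moment[of "2*k"] by (subst nn_integral_eq_integral) (auto simp: power_mult)
  also have "\<dots> = ennreal (fact (2 * k) / (2^k * fact k))"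
    by (simp add: integral_std_normal_moment_even)
  finally show ?thesis .
qed

lemma SN_m2: "(\<integral>\<^sup>+x. ennreal (x^2) \<partial>SN) = 1"
  using SN_moment_even[of 1] by simp

lemma SN_m4: "(\<integral>\<^sup>+x. ennreal (x^4) \<partial>SN) = 3"
  using SN_moment_even[of 2] by (simp add: fact_numeral)


lemma vec_meas: "(\<lambda>f. \<chi> i. f i) \<in> borel_measurable (PiM (UNIV::'d::finite set) (\<lambda>_. M))"
  if "sets M = sets (borel :: real measure)" for M
proof (subst borel_measurable_euclidean_space, intro ballI)
  fix j :: "real^'d" assume "j \<in> Basis"
  then obtain k where j: "j = axis k 1" by (auto simp: Basis_vec_def)
  have "(\<lambda>f. f k) \<in> measurable (PiM (UNIV::'d set) (\<lambda>_. M)) M"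
    by (rule measurable_component_singleton) simp
  then have "(\<lambda>f. f k) \<in> borel_measurable (PiM (UNIV::'d set) (\<lambda>_. M))"
    using measurable_cong_sets[OF refl that] by blast
  moreover have "(\<lambda>f. (\<chi> i. f i) \<bullet> j) = (\<lambda>f. f k)"
    unfolding j inner_axis by simp
  ultimately show "(\<lambda>f. (\<chi> i. f i) \<bullet> j) \<in> borel_measurable (PiM UNIV (\<lambda>_. M))"
    by simp
qed

lemma SG_sets: "sets std_gauss_vec = sets borel"
  unfolding std_gauss_vec_def by simp

lemma SG_prob: "prob_space (std_gauss_vec :: (real^'d::finite) measure)"
proof -
  interpret SN: prob_space SN by (rule SN_prob)
  interpret P: prob_space "PiM (UNIV::'d set) (\<lambda>_. SN)"
    by (intro prob_space_PiM SN_prob)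
  show ?thesis unfolding std_gauss_vec_def
    by (intro P.prob_space_distr vec_meas) simp
qed

lemma SG_comp:
  fixes G :: "real \<Rightarrow> real"
  assumes [measurable]: "G \<in> borel_measurable borel"
  shows "(\<integral>\<^sup>+f. ennreal (G (f k)) \<partial>PiM (UNIV::'d::finite set) (\<lambda>_. SN)) = (\<integral>\<^sup>+x. ennreal (G x) \<partial>SN)"
    and "integrable SN G \<Longrightarrow> integrable (PiM (UNIV::'d set) (\<lambda>_. SN)) (\<lambda>f. G (f k))"
    and "(\<integral>f. G (f k) \<partial>PiM (UNIV::'d set) (\<lambda>_. SN)) = (\<integral>x. G x \<partial>SN)"
proof -
  have eq: "distr (PiM (UNIV::'d set) (\<lambda>_. SN)) SN (\<lambda>f. f k) = SN"
    by (rule distr_PiM_component) (auto intro: SN_prob)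
  have m: "(\<lambda>f. f k) \<in> measurable (PiM (UNIV::'d set) (\<lambda>_. SN)) SN" by simp
  have "(\<integral>\<^sup>+x. ennreal (G x) \<partial>SN) = (\<integral>\<^sup>+x. ennreal (G x) \<partial>distr (PiM (UNIV::'d set) (\<lambda>_. SN)) SN (\<lambda>f. f k))"
    by (simp add: eq)
  also have "\<dots> = (\<integral>\<^sup>+f. ennreal (G (f k)) \<partial>PiM (UNIV::'d::finite set) (\<lambda>_. SN))"
    by (subst nn_integral_distr[OF m]) auto
  finally show "(\<integral>\<^sup>+f. ennreal (G (f k)) \<partial>PiM (UNIV::'d::finite set) (\<lambda>_. SN)) = (\<integral>\<^sup>+x. ennreal (G x) \<partial>SN)" by simp
  show "integrable SN G \<Longrightarrow> integrable (PiM (UNIV::'d set) (\<lambda>_. SN)) (\<lambda>f. G (f k))"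
    using integrable_distr_eq[OF m, of G] eq by simp
  have "(\<integral>x. G x \<partial>SN) = (\<integral>x. G x \<partial>distr (PiM (UNIV::'d set) (\<lambda>_. SN)) SN (\<lambda>f. f k))"
    by (simp add: eq)
  also have "\<dots> = (\<integral>f. G (f k) \<partial>PiM (UNIV::'d set) (\<lambda>_. SN))"
    by (subst integral_distr[OF m]) auto
  finally show "(\<integral>f. G (f k) \<partial>PiM (UNIV::'d set) (\<lambda>_. SN)) = (\<integral>x. G x \<partial>SN)" by simp
qed



lemma SG_mean0:
  fixes A :: "real^'d::finite"
  shows "integrable std_gauss_vec (\<lambda>z. A \<bullet> z) \<and> (\<integral>z. A \<bullet> z \<partial>std_gauss_vec) = 0"
proof -
  let ?P = "PiM (UNIV::'d set) (\<lambda>_. SN)"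
  interpret SN: prob_space SN by (rule SN_prob)
  interpret P: prob_space ?P by (intro prob_space_PiM SN_prob)
  have vm': "(\<lambda>f. \<chi> i. f i) \<in> measurable ?P (borel :: (real^'d) measure)" by (rule vec_meas) simp
  have ip: "A \<bullet> (\<chi> i. f i) = (\<Sum>i\<in>UNIV. A $ i * f i)" for f by (simp add: inner_vec_def)
  have ic: "integrable ?P (\<lambda>f. f i)" for i using SG_comp(2)[OF measurable_ident_sets[OF refl] SN_mean(1), of i] by simp
  have ic0: "(\<integral>f. f i \<partial>?P) = 0" for i using SG_comp(3)[OF measurable_ident_sets[OF refl], of i] SN_mean(2) by simp
  have "integrable ?P (\<lambda>f. \<Sum>i\<in>UNIV. A $ i * f i)"
    using ic by simp
  then have "integrable ?P (\<lambda>f. A \<bullet> (\<chi> i. f i))" unfolding ip .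
  moreover have im: "(\<lambda>z::real^'d. A \<bullet> z) \<in> borel_measurable borel"
    by (intro borel_measurable_continuous_onI continuous_intros)
  ultimately have i1: "integrable std_gauss_vec (\<lambda>z. A \<bullet> z)"
    unfolding std_gauss_vec_def using integrable_distr_eq[OF vm' im] by simp
  have "(\<integral>z. A \<bullet> z \<partial>std_gauss_vec) = (\<integral>f. A \<bullet> (\<chi> i. f i) \<partial>?P)"
    unfolding std_gauss_vec_def using integral_distr[OF vm' im] by simp
  also have "\<dots> = (\<integral>f. (\<Sum>i\<in>UNIV. A $ i * f i) \<partial>?P)" unfolding ip ..
  also have "\<dots> = (\<Sum>i\<in>UNIV. (\<integral>f. A $ i * f i \<partial>?P))"
    using ic by (simp only: integral_sum' integrable_mult_right)
  also have "\<dots> = (\<Sum>i\<in>UNIV. A $ i * (\<integral>f. f i \<partial>?P))"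
    by (simp only: integral_mult_right_zero)
  also have "\<dots> = 0" using ic0 by simp
  finally show ?thesis using i1 by simp
qed


lemma SG_m2: "(\<integral>\<^sup>+z. ennreal (norm (z::real^'d::finite)^2) \<partial>std_gauss_vec) \<le> ennreal (real CARD('d))"
proof -
  let ?P = "PiM (UNIV::'d set) (\<lambda>_. SN)"
  have vm': "(\<lambda>f. \<chi> i. f i) \<in> measurable ?P (borel :: (real^'d) measure)" by (rule vec_meas) simp
  have gm: "(\<lambda>z::real^'d. ennreal (norm z^2)) \<in> borel_measurable borel" by measurable
  have n2: "norm (\<chi> i. f i :: real^'d)^2 = (\<Sum>i\<in>UNIV. (f i)^2)" for f
    unfolding power2_norm_eq_inner inner_vec_def by (simp add: power2_eq_square)
  have "(\<integral>\<^sup>+z. ennreal (norm (z::real^'d)^2) \<partial>std_gauss_vec) = (\<integral>\<^sup>+f. ennreal (norm (\<chi> i. f i :: real^'d)^2) \<partial>?P)"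
    unfolding std_gauss_vec_def using nn_integral_distr[OF vm', of "\<lambda>z. ennreal (norm z^_)"] gm by simp
  also have "\<dots> = (\<integral>\<^sup>+f. (\<Sum>i\<in>UNIV. ennreal ((f i)^2)) \<partial>?P)"
    unfolding n2 by (intro nn_integral_cong) (simp add: sum_ennreal sum_nonneg)
  also have "\<dots> = (\<Sum>i\<in>UNIV. (\<integral>\<^sup>+f. ennreal ((f i)^2) \<partial>?P))"
    by (rule nn_integral_sum) measurable
  also have "\<dots> = (\<Sum>i\<in>(UNIV::'d set). 1)"
  proof (rule sum.cong[OF refl])
    fix i :: 'd
    have gi: "(\<lambda>x::real. x^2) \<in> borel_measurable borel" by measurable
    show "(\<integral>\<^sup>+f. ennreal ((f i)^2) \<partial>?P) = 1" using SG_comp(1)[OF gi, of i] SN_m2 by simp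
  qed
  also have "\<dots> = ennreal (real CARD('d))" by (simp add: ennreal_of_nat_eq_real_of_nat)
  finally show ?thesis by simp
qed

lemma SG_m4: "(\<integral>\<^sup>+z. ennreal (norm (z::real^'d::finite)^4) \<partial>std_gauss_vec) \<le> ennreal (3 * real CARD('d)^2)"
proof -
  let ?P = "PiM (UNIV::'d set) (\<lambda>_. SN)"
  have vm': "(\<lambda>f. \<chi> i. f i) \<in> measurable ?P (borel :: (real^'d) measure)" by (rule vec_meas) simp
  have gm: "(\<lambda>z::real^'d. ennreal (norm z^4)) \<in> borel_measurable borel" by measurable
  have n4: "norm (\<chi> i. f i :: real^'d)^4 \<le> real CARD('d) * (\<Sum>i\<in>UNIV. (f i)^4)" for f
  proof -
    have "norm (\<chi> i. f i :: real^'d)^2 = (\<Sum>i\<in>UNIV. (f i)^2)"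
      unfolding power2_norm_eq_inner inner_vec_def by (simp add: power2_eq_square)
    then have "norm (\<chi> i. f i :: real^'d)^4 = (\<Sum>i\<in>UNIV. (f i)^2)^2"
      by (metis (no_types, lifting) numeral_Bit0 numeral_One one_add_one power_add power2_eq_square)
    also have "\<dots> \<le> (\<Sum>i\<in>UNIV. ((f i)^2)^2) * card (UNIV::'d set)"
      by (rule sum_squared_le_sum_of_squares)
    finally show ?thesis by (simp add: power_mult[symmetric] mult.commute)
  qed
  have "(\<integral>\<^sup>+z. ennreal (norm (z::real^'d)^4) \<partial>std_gauss_vec) = (\<integral>\<^sup>+f. ennreal (norm (\<chi> i. f i :: real^'d)^4) \<partial>?P)"
    unfolding std_gauss_vec_def using nn_integral_distr[OF vm', of "\<lambda>z. ennreal (norm z^_)"] gm by simp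
  also have "\<dots> \<le> (\<integral>\<^sup>+f. ennreal (real CARD('d)) * (\<Sum>i\<in>UNIV. ennreal ((f i)^4)) \<partial>?P)"
  proof (intro nn_integral_mono)
    fix f :: "'d \<Rightarrow> real"
    have "ennreal (norm (\<chi> i. f i :: real^'d)^4) \<le> ennreal (real CARD('d) * (\<Sum>i\<in>UNIV. (f i)^4))"
      using n4 by (rule ennreal_leI)
    also have "\<dots> = ennreal (real CARD('d)) * (\<Sum>i\<in>UNIV. ennreal ((f i)^4))"
      by (simp add: sum_ennreal sum_nonneg ennreal_mult[symmetric])
    finally show "ennreal (norm (\<chi> i. f i :: real^'d)^4) \<le> ennreal (real CARD('d)) * (\<Sum>i\<in>UNIV. ennreal ((f i)^4))" .
  qed
  also have "\<dots> = ennreal (real CARD('d)) * (\<integral>\<^sup>+f. (\<Sum>i\<in>UNIV. ennreal ((f i)^4)) \<partial>?P)"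
    by (rule nn_integral_cmult) measurable
  also have "(\<integral>\<^sup>+f. (\<Sum>i\<in>UNIV. ennreal ((f i)^4)) \<partial>?P) = (\<Sum>i\<in>UNIV. (\<integral>\<^sup>+f. ennreal ((f i)^4) \<partial>?P))"
    by (rule nn_integral_sum) measurable
  also have "\<dots> = (\<Sum>i\<in>(UNIV::'d set). 3)"
  proof (rule sum.cong[OF refl])
    fix i :: 'd
    have gi: "(\<lambda>x::real. x^4) \<in> borel_measurable borel" by measurable
    show "(\<integral>\<^sup>+f. ennreal ((f i)^4) \<partial>?P) = 3" using SG_comp(1)[OF gi, of i] SN_m4 by simp
  qed
  also have "ennreal (real CARD('d)) * (\<Sum>i\<in>(UNIV::'d set). 3) = ennreal (3 * real CARD('d)^2)"
    by (simp add: ennreal_of_nat_eq_real_of_nat ennreal_mult power2_eq_square ac_simps)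
  finally show ?thesis .
qed



lemma nn_lin3:
  assumes P: "prob_space P" and f: "f \<in> borel_measurable P" and g: "g \<in> borel_measurable P"
    and fn: "\<And>x. 0 \<le> f x" and gn: "\<And>x. 0 \<le> g x" and a: "0 \<le> a" and b: "0 \<le> b"
  shows "(\<integral>\<^sup>+x. ennreal (f x + a * g x + b) \<partial>P) = (\<integral>\<^sup>+x. ennreal (f x) \<partial>P) + ennreal a * (\<integral>\<^sup>+x. ennreal (g x) \<partial>P) + ennreal b"
proof -
  interpret prob_space P by fact
  have "(\<integral>\<^sup>+x. ennreal (f x + a * g x + b) \<partial>P) = (\<integral>\<^sup>+x. ennreal (f x) + ennreal a * ennreal (g x) + ennreal b \<partial>P)"
    using fn gn a b by (intro nn_integral_cong) (simp add: ennreal_plus ennreal_mult)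
  also have "\<dots> = (\<integral>\<^sup>+x. ennreal (f x) + ennreal a * ennreal (g x) \<partial>P) + (\<integral>\<^sup>+x. ennreal b \<partial>P)"
    using f g by (intro nn_integral_add) auto
  also have "(\<integral>\<^sup>+x. ennreal (f x) + ennreal a * ennreal (g x) \<partial>P) = (\<integral>\<^sup>+x. ennreal (f x) \<partial>P) + (\<integral>\<^sup>+x. ennreal a * ennreal (g x) \<partial>P)"
    using f g by (intro nn_integral_add) auto
  also have "(\<integral>\<^sup>+x. ennreal a * ennreal (g x) \<partial>P) = ennreal a * (\<integral>\<^sup>+x. ennreal (g x) \<partial>P)"
    using g by (intro nn_integral_cmult) auto
  also have "(\<integral>\<^sup>+x. ennreal b \<partial>P) = ennreal b"
    by (simp add: emeasure_space_1)
  finally show ?thesis .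
qed

lemma gauss2_step:
  fixes A :: "real^'d::finite" and c :: real
  defines "g2 \<equiv> real CARD('d)" and "g4 \<equiv> 3 * real CARD('d)^2"
  shows "(\<integral>\<^sup>+p1. \<integral>\<^sup>+p2. ennreal (norm (A + c *\<^sub>R (p1 + p2))^4) \<partial>std_gauss_vec \<partial>std_gauss_vec)
      \<le> ennreal (norm A^4 + 16*c^2*g2*norm A^2 + c^4*(8*g2^2 + 6*g4))"
proof -
  let ?G = "std_gauss_vec :: (real^'d) measure"
  have G: "prob_space ?G" by (rule SG_prob)
  interpret G: prob_space ?G by (rule G)
  have vm: "(\<lambda>z. z) \<in> borel_measurable ?G" using SG_sets measurable_ident_sets by blast
  have g2n: "0 \<le> g2" and g4n: "0 \<le> g4" by (simp_all add: g2_def g4_def)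
  note MS = moment_step[OF G vm SG_mean0[where 'd='d] SG_m2[where 'd='d, folded g2_def] g2n SG_m4[where 'd='d, folded g4_def] g4n]
  have "(\<integral>\<^sup>+p1. \<integral>\<^sup>+p2. ennreal (norm (A + c *\<^sub>R (p1 + p2))^4) \<partial>?G \<partial>?G)
     \<le> (\<integral>\<^sup>+p1. ennreal (norm (A + c *\<^sub>R p1)^4 + (8*c^2*g2) * norm (A + c *\<^sub>R p1)^2 + 3*c^4*g4) \<partial>?G)"
  proof (rule nn_integral_mono)
    fix p1 :: "real^'d"
    have "A + c *\<^sub>R (p1 + p2) = (A + c *\<^sub>R p1) + c *\<^sub>R p2" for p2 by (simp add: algebra_simps)
    then show "(\<integral>\<^sup>+p2. ennreal (norm (A + c *\<^sub>R (p1 + p2))^4) \<partial>?G)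
       \<le> ennreal (norm (A + c *\<^sub>R p1)^4 + (8*c^2*g2) * norm (A + c *\<^sub>R p1)^2 + 3*c^4*g4)"
      using MS(1)[of "A + c *\<^sub>R p1" c] by (simp add: ac_simps)
  qed
  also have "\<dots> = (\<integral>\<^sup>+p1. ennreal (norm (A + c *\<^sub>R p1)^4) \<partial>?G) + ennreal (8*c^2*g2) * (\<integral>\<^sup>+p1. ennreal (norm (A + c *\<^sub>R p1)^2) \<partial>?G) + ennreal (3*c^4*g4)"
  proof (rule nn_lin3[OF G])
    have SGm: "f \<in> borel_measurable ?G" if "f \<in> borel_measurable borel" for f :: "real^'d \<Rightarrow> real"
      using that measurable_cong_sets[OF SG_sets refl] by blast
    show "(\<lambda>x. norm (A + c *\<^sub>R x)^4) \<in> borel_measurable ?G"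
      by (intro SGm borel_measurable_continuous_onI continuous_intros)
    show "(\<lambda>x. norm (A + c *\<^sub>R x)^2) \<in> borel_measurable ?G"
      by (intro SGm borel_measurable_continuous_onI continuous_intros)
  qed (auto simp: g2n g4n)
  also have "\<dots> \<le> ennreal (norm A^4 + 8*c^2*norm A^2*g2 + 3*c^4*g4) + ennreal (8*c^2*g2) * ennreal (norm A^2 + c^2*g2) + ennreal (3*c^4*g4)"
    by (intro add_mono mult_left_mono MS order_refl) auto
  also have "\<dots> = ennreal (norm A^4 + 8*c^2*norm A^2*g2 + 3*c^4*g4 + (8*c^2*g2) * (norm A^2 + c^2*g2) + 3*c^4*g4)"
    using g2n g4n by (simp add: ennreal_plus[symmetric] ennreal_mult[symmetric] del: ennreal_plus)
  also have "norm A^4 + 8*c^2*norm A^2*g2 + 3*c^4*g4 + (8*c^2*g2) * (norm A^2 + c^2*g2) + 3*c^4*g4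
      = norm A^4 + 16*c^2*g2*norm A^2 + c^4*(8*g2^2 + 6*g4)"
    by (simp add: algebra_simps power2_eq_square power4_eq_xxxx)
  finally show ?thesis .
qed



lemma cc_z_local:
  "(\<And>j. j \<le> 2*m \<Longrightarrow> z j = z' j) \<Longrightarrow> coarse_chain \<beta> h F x0 z m = coarse_chain \<beta> h F x0 z' m"
  by (induction m) auto

lemma cc_F_local:
  "(\<And>y j. j < 2*m \<Longrightarrow> F y j = F' y j) \<Longrightarrow> coarse_chain \<beta> h F x0 z m = coarse_chain \<beta> h F' x0 z m"
  by (induction m) auto

lemma cc_meas:
  assumes F: "\<And>j f. f \<in> borel_measurable M \<Longrightarrow> (\<lambda>\<omega>. F \<omega> (f \<omega>) j) \<in> borel_measurable M"
    and x0: "x0 \<in> borel_measurable M" and z: "\<And>j. (\<lambda>\<omega>. z \<omega> j) \<in> borel_measurable M"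
  shows "(\<lambda>\<omega>. coarse_chain \<beta> h (F \<omega>) (x0 \<omega>) (z \<omega>) m) \<in> borel_measurable M"
proof (induction m)
  case 0
  then show ?case using x0 by simp
next
  case (Suc m)
  show ?case
    by (simp only: coarse_chain.simps, intro borel_measurable_add borel_measurable_scaleR
        borel_measurable_const Suc F z)
qed

definition Om0 :: "((real^'d) \<times> (nat \<Rightarrow> real^'d) \<times> (nat \<Rightarrow> real^'n)) measure" where
  "Om0 = borel \<Otimes>\<^sub>M (PiM UNIV (\<lambda>_. borel) \<Otimes>\<^sub>M PiM UNIV (\<lambda>_. borel))"

lemma sets_coupled:
  assumes "sets \<nu> = sets borel" "sets (QQ (2 * s)) = sets borel"
  shows "sets (coupled_space \<nu> QQ s) = sets Om0"
  unfolding coupled_space_def Om0_def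
  by (intro sets_pair_measure_cong assms sets_PiM_cong refl) (simp_all add: SG_sets assms)

lemma Om0_x0: "fst \<in> borel_measurable (Om0 :: ((real^'d) \<times> (nat \<Rightarrow> real^'d) \<times> (nat \<Rightarrow> real^'n)) measure)"
  unfolding Om0_def by simp

lemma Om0_z: "(\<lambda>\<omega>. fst (snd \<omega>) j) \<in> borel_measurable (Om0 :: ((real^'d) \<times> (nat \<Rightarrow> real^'d) \<times> (nat \<Rightarrow> real^'n)) measure)"
  unfolding Om0_def by measurable

lemma Om0_u: "(\<lambda>\<omega>. snd (snd \<omega>) j) \<in> borel_measurable (Om0 :: ((real^'d) \<times> (nat \<Rightarrow> real^'d) \<times> (nat \<Rightarrow> real^'n)) measure)"
  unfolding Om0_def by measurable



lemma young: fixes W t K :: real assumes "K > 0" shows "W * t \<le> K/2 * t^2 + W^2/(2*K)"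
proof -
  have "0 \<le> (K*t - W)^2" by simp
  then have "2*K*(W*t) \<le> K^2*t^2 + W^2" by (simp add: power2_eq_square algebra_simps)
  then have "W*t \<le> (K^2*t^2 + W^2)/(2*K)" using assms by (simp add: field_simps)
  also have "\<dots> = K/2 * t^2 + W^2/(2*K)" using assms by (simp add: field_simps power2_eq_square)
  finally show ?thesis .
qed

lemma X_real:
  fixes \<gamma> K R bb g2 g4 t A2 c2 :: real
  assumes K: "K > 0" and g: "0 < \<gamma>" "\<gamma> \<le> 1" "\<gamma>*K \<le> 1"
    and A2: "0 \<le> A2" "A2 \<le> (1-\<gamma>*K)*t + \<gamma>*R"
    and nn: "0 \<le> t" "0 \<le> R" "0 \<le> bb" "0 \<le> g2" "0 \<le> g4"
    and c2: "c2 = bb*\<gamma>/2"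
  shows "A2^2 + 16*c2*g2*A2 + c2^2*(8*g2^2 + 6*g4)
     \<le> (1-\<gamma>*K/2)*t^2 + \<gamma>*((2*R+8*bb*g2)^2/(2*K) + R^2 + 8*bb*g2*R + 2*bb^2*(g2^2+g4))"
proof -
  define e where "e = 1 - \<gamma>*K"
  have e: "0 \<le> e" "e \<le> 1" using g K unfolding e_def by (auto simp: mult_pos_pos)
  have s1: "A2^2 \<le> (e*t + \<gamma>*R)^2" using A2 unfolding e_def by (intro power_mono) auto
  have "e^2 * t^2 \<le> e * t^2" using e by (intro mult_right_mono) (auto simp: power2_eq_square mult_left_le_one_le)
  moreover have "e*\<gamma>*R*t \<le> \<gamma>*R*t" using e g nn by (intro mult_right_mono) (auto intro!: mult_nonneg_nonneg mult_left_le_one_le)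
  moreover have "\<gamma>^2*R^2 \<le> \<gamma>*R^2" using g by (intro mult_right_mono) (auto simp: power2_eq_square mult_left_le_one_le)
  moreover have "(e*t + \<gamma>*R)^2 = e^2*t^2 + 2*(e*\<gamma>*R*t) + \<gamma>^2*R^2" by (simp add: power2_eq_square algebra_simps)
  ultimately have s2: "A2^2 \<le> e*t^2 + 2*(\<gamma>*R*t) + \<gamma>*R^2" using s1 by linarith
  have s3: "A2 \<le> t + R"
  proof -
    have "e*t \<le> t" using e nn by (simp add: mult_left_le_one_le)
    moreover have "\<gamma>*R \<le> R" using g nn by (simp add: mult_left_le_one_le)
    ultimately show ?thesis using A2 unfolding e_def by linarith
  qed
  have s4: "16*c2*g2*A2 \<le> 8*bb*\<gamma>*g2*(t+R)"
  proof -
    have "16*c2*g2*A2 = (8*bb*\<gamma>*g2)*A2" using c2 by (simp add: algebra_simps)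
    also have "\<dots> \<le> (8*bb*\<gamma>*g2)*(t+R)" using s3 nn g by (intro mult_left_mono) auto
    finally show ?thesis by simp
  qed
  have s5: "c2^2*(8*g2^2 + 6*g4) \<le> \<gamma>*(bb^2*(2*g2^2+2*g4))"
  proof -
    have "c2^2*(8*g2^2 + 6*g4) = \<gamma>^2*(bb^2*(2*g2^2 + (3/2)*g4))" unfolding c2 by (simp add: power2_eq_square field_simps)
    also have "\<dots> \<le> \<gamma>*(bb^2*(2*g2^2 + (3/2)*g4))" using g nn
      by (intro mult_right_mono) (auto simp: power2_eq_square mult_left_le_one_le)
    also have "\<dots> \<le> \<gamma>*(bb^2*(2*g2^2+2*g4))" using g nn
      by (intro mult_left_mono) auto
    finally show ?thesis .
  qed
  have s6: "\<gamma>*((2*R+8*bb*g2)*t) \<le> \<gamma>*(K/2*t^2 + (2*R+8*bb*g2)^2/(2*K))"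
    using young[OF K] g by (intro mult_left_mono) auto
  have "A2^2 + 16*c2*g2*A2 + c2^2*(8*g2^2 + 6*g4)
      \<le> e*t^2 + 2*(\<gamma>*R*t) + \<gamma>*R^2 + 8*bb*\<gamma>*g2*(t+R) + \<gamma>*(bb^2*(2*g2^2+2*g4))"
    using s2 s4 s5 by linarith
  also have "\<dots> = e*t^2 + \<gamma>*((2*R+8*bb*g2)*t) + \<gamma>*(R^2 + 8*bb*g2*R + 2*bb^2*(g2^2+g4))"
    by (simp add: algebra_simps)
  also have "\<dots> \<le> e*t^2 + \<gamma>*(K/2*t^2 + (2*R+8*bb*g2)^2/(2*K)) + \<gamma>*(R^2 + 8*bb*g2*R + 2*bb^2*(g2^2+g4))"
    using s6 by linarith
  also have "\<dots> = (1-\<gamma>*K/2)*t^2 + \<gamma>*((2*R+8*bb*g2)^2/(2*K) + R^2 + 8*bb*g2*R + 2*bb^2*(g2^2+g4))"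
    unfolding e_def by (simp add: algebra_simps)
  finally show ?thesis .
qed


lemma A_bound:
  fixes a :: "'a::real_inner \<Rightarrow> 'a"
  assumes lip: "\<And>x y. norm (a x - a y) \<le> L * norm (x - y)"
    and diss: "\<And>x y. inner (x - y) (a x - a y) \<le> - K * norm (x - y)^2"
    and K: "K > 0" and g: "0 < \<gamma>" "\<gamma> \<le> 1" "\<gamma>*(4*L^2) \<le> K"
  shows "norm (x + \<gamma> *\<^sub>R a x)^2 \<le> (1-\<gamma>*K)*norm x^2 + \<gamma>*(2*norm (a 0)^2/K + 2*norm (a 0)^2)"
proof -
  define t where "t = norm x^2"
  define nx where "nx = norm x"
  define n0 where "n0 = norm (a 0)"
  have t: "t = nx^2" unfolding t_def nx_def ..
  have nn: "0 \<le> nx" "0 \<le> n0" unfolding nx_def n0_def by auto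
  have e1: "norm (x + \<gamma> *\<^sub>R a x)^2 = t + 2*\<gamma>*(x \<bullet> a x) + \<gamma>^2*norm (a x)^2"
    unfolding t_def by (rule sq_eq)
  have i1: "x \<bullet> a x \<le> -K*t + nx*n0"
  proof -
    have "x \<bullet> (a x - a 0) \<le> -K*t" using diss[of x 0] unfolding t_def by simp
    moreover have "x \<bullet> a 0 \<le> nx*n0" unfolding nx_def n0_def by (rule norm_cauchy_schwarz)
    moreover have "x \<bullet> a x = x \<bullet> (a x - a 0) + x \<bullet> a 0" by (simp add: inner_diff_right)
    ultimately show ?thesis by linarith
  qed
  have i2: "norm (a x)^2 \<le> 2*L^2*t + 2*n0^2"
  proof -
    have "norm (a x) \<le> norm (a x - a 0) + norm (a 0)" using norm_triangle_ineq[of "a x - a 0" "a 0"] by simp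
    also have "\<dots> \<le> L*nx + n0" using lip[of x 0] unfolding nx_def n0_def by simp
    finally have "norm (a x)^2 \<le> (L*nx + n0)^2" by (intro power_mono) auto
    also have "\<dots> \<le> 2*L^2*t + 2*n0^2"
    proof -
      have "0 \<le> (L*nx - n0)^2" by simp
      then show ?thesis unfolding t by (simp add: power2_eq_square algebra_simps)
    qed
    finally show ?thesis .
  qed
  have i3: "2*n0*nx \<le> K/2*nx^2 + (2*n0)^2/(2*K)" using young[OF K, of "2*n0" nx] by simp
  have i3': "\<gamma>*(2*n0*nx) \<le> \<gamma>*(K/2*t + 2*n0^2/K)"
  proof -
    have "(2*n0)^2/(2*K) = 2*n0^2/K" using K by (simp add: power2_eq_square field_simps)
    then show ?thesis using i3 g unfolding t by (intro mult_left_mono) auto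
  qed
  have i4: "\<gamma>^2*(2*L^2*t) \<le> \<gamma>*(K/2*t)"
  proof -
    have "\<gamma>^2*(2*L^2*t) = \<gamma>*((\<gamma>*(4*L^2))/2*t)" by (simp add: power2_eq_square)
    also have "\<dots> \<le> \<gamma>*(K/2*t)" using g unfolding t by (intro mult_left_mono mult_right_mono) auto
    finally show ?thesis .
  qed
  have i5: "\<gamma>^2*(2*n0^2) \<le> \<gamma>*(2*n0^2)" using g by (intro mult_right_mono) (auto simp: power2_eq_square mult_left_le_one_le)
  have i1': "2*\<gamma>*(x \<bullet> a x) \<le> 2*\<gamma>*(-K*t) + \<gamma>*(2*n0*nx)"
  proof -
    have "2*\<gamma>*(x \<bullet> a x) \<le> 2*\<gamma>*(-K*t + nx*n0)" using i1 g by (intro mult_left_mono) auto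
    then show ?thesis by (simp add: algebra_simps)
  qed
  have i2': "\<gamma>^2*norm (a x)^2 \<le> \<gamma>^2*(2*L^2*t) + \<gamma>^2*(2*n0^2)"
  proof -
    have "\<gamma>^2*norm (a x)^2 \<le> \<gamma>^2*(2*L^2*t + 2*n0^2)" using i2 by (intro mult_left_mono) auto
    then show ?thesis by (simp add: algebra_simps)
  qed
  have "norm (x + \<gamma> *\<^sub>R a x)^2 \<le> t + 2*\<gamma>*(-K*t) + \<gamma>*(K/2*t + 2*n0^2/K) + \<gamma>*(K/2*t) + \<gamma>*(2*n0^2)"
    using e1 i1' i2' i3' i4 i5 by linarith
  also have "\<dots> = (1-\<gamma>*K)*t + \<gamma>*(2*n0^2/K + 2*n0^2)" by (simp add: algebra_simps)
  finally show ?thesis unfolding t_def n0_def .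
qed

lemma D_bound:
  fixes a :: "'a::real_inner \<Rightarrow> 'a"
  assumes lip: "\<And>x y. norm (a x - a y) \<le> L * norm (x - y)"
    and diss: "\<And>x y. inner (x - y) (a x - a y) \<le> - K * norm (x - y)^2"
    and g: "0 < \<gamma>" "\<gamma>*L^2 \<le> K"
  shows "norm ((y - x) + \<gamma> *\<^sub>R (a y - a x))^2 \<le> (1-\<gamma>*K)*norm (y - x)^2"
proof -
  have e: "norm ((y - x) + \<gamma> *\<^sub>R (a y - a x))^2 = norm (y-x)^2 + 2*\<gamma>*((y-x) \<bullet> (a y - a x)) + \<gamma>^2*norm (a y - a x)^2"
    by (rule sq_eq)
  have i1: "2*\<gamma>*((y-x) \<bullet> (a y - a x)) \<le> 2*\<gamma>*(-K*norm (y-x)^2)"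
    using diss[of y x] g by (intro mult_left_mono) auto
  have "norm (a y - a x)^2 \<le> (L*norm (y-x))^2" using lip[of y x] by (intro power_mono) auto
  then have i2: "\<gamma>^2*norm (a y - a x)^2 \<le> \<gamma>^2*(L^2*norm (y-x)^2)"
    by (intro mult_left_mono) (auto simp: power_mult_distrib)
  have i3: "\<gamma>^2*(L^2*norm (y-x)^2) \<le> \<gamma>*(K*norm (y-x)^2)"
  proof -
    have "\<gamma>^2*(L^2*norm (y-x)^2) = \<gamma>*((\<gamma>*L^2)*norm (y-x)^2)" by (simp add: power2_eq_square)
    also have "\<dots> \<le> \<gamma>*(K*norm (y-x)^2)" using g by (intro mult_left_mono mult_right_mono) auto
    finally show ?thesis .
  qed
  show ?thesis using e i1 i2 i3 by (simp add: algebra_simps)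
qed

lemma d_real:
  fixes \<gamma> K kp P DD dd Y2 X4 rr :: real
  assumes K: "K > 0" and g: "0 < \<gamma>" "\<gamma> \<le> 1" "\<gamma>*K \<le> 1" "8*\<gamma>^2*P \<le> K/4"
    and DD: "0 \<le> DD" "DD \<le> (1-\<gamma>*K)*dd" and dd: "0 \<le> dd"
    and kp: "0 \<le> kp" and P: "P = 64*kp^2/K + 3*kp"
    and rr: "0 < rr" "rr \<le> 1"
    and Y: "0 \<le> Y2" "Y2^2 \<le> 8*X4 + 8*dd^2"
  shows "DD^2 + 8*\<gamma>^2*DD*(kp*rr*(1+Y2)) + 3*\<gamma>^4*(kp*rr^2*(1+Y2^2))
     \<le> (1-\<gamma>*K/4)*dd^2 + \<gamma>^3*P*(1+8*X4)*rr^2"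
proof -
  define e where "e = 1 - \<gamma>*K"
  have e: "0 \<le> e" "e \<le> 1" using g K unfolding e_def by (auto simp: mult_pos_pos)
  have Pn: "0 \<le> P" unfolding P using kp K by auto
  have a: "DD^2 \<le> e*dd^2"
  proof -
    have "DD^2 \<le> (e*dd)^2" using DD unfolding e_def by (intro power_mono) auto
    also have "\<dots> = e^2*dd^2" by (simp add: power_mult_distrib)
    also have "\<dots> \<le> e*dd^2" using e by (intro mult_right_mono) (auto simp: power2_eq_square mult_left_le_one_le)
    finally show ?thesis .
  qed
  have DDd: "DD \<le> dd" using DD e dd unfolding e_def by (meson mult_left_le_one_le order_trans)
  define W where "W = 8*\<gamma>^2*kp*rr*(1+Y2)"
  have Wn: "0 \<le> W" unfolding W_def using g kp rr Y by auto
  have b1: "8*\<gamma>^2*DD*(kp*rr*(1+Y2)) \<le> W*dd"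
  proof -
    have "8*\<gamma>^2*DD*(kp*rr*(1+Y2)) = W*DD" unfolding W_def by (simp add: algebra_simps)
    also have "\<dots> \<le> W*dd" using Wn DDd by (intro mult_left_mono) auto
    finally show ?thesis .
  qed
  have gK: "\<gamma>*K > 0" using g K by simp
  have b2: "W*dd \<le> (\<gamma>*K)/2*dd^2 + W^2/(2*(\<gamma>*K))" by (rule young[OF gK])
  have c1: "(1+Y2)^2 \<le> 2*(1+Y2^2)"
  proof -
    have "0 \<le> (Y2 - 1)^2" by simp
    then show ?thesis by (simp add: power2_eq_square algebra_simps)
  qed
  have b3: "W^2/(2*(\<gamma>*K)) \<le> \<gamma>^3*(64*kp^2/K)*rr^2*(1+Y2^2)"
  proof -
    have "W^2/(2*(\<gamma>*K)) = \<gamma>^3*(32*kp^2/K)*rr^2*(1+Y2)^2"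
      unfolding W_def using g K by (simp add: power2_eq_square field_simps power3_eq_cube power4_eq_xxxx)
    also have "\<dots> \<le> \<gamma>^3*(32*kp^2/K)*rr^2*(2*(1+Y2^2))"
      using c1 g K by (intro mult_left_mono) auto
    finally show ?thesis by (simp add: algebra_simps)
  qed
  have d1: "3*\<gamma>^4*(kp*rr^2*(1+Y2^2)) \<le> \<gamma>^3*(3*kp)*rr^2*(1+Y2^2)"
  proof -
    have "3*\<gamma>^4*(kp*rr^2*(1+Y2^2)) = \<gamma>*(\<gamma>^3*(3*kp)*rr^2*(1+Y2^2))" by (simp add: algebra_simps power4_eq_xxxx power3_eq_cube)
    also have "\<dots> \<le> 1*(\<gamma>^3*(3*kp)*rr^2*(1+Y2^2))" using g kp Y by (intro mult_right_mono) auto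
    finally show ?thesis by simp
  qed
  have e1: "\<gamma>^3*P*rr^2*(1+Y2^2) \<le> \<gamma>^3*P*rr^2*(1+8*X4+8*dd^2)"
    using Y g Pn by (intro mult_left_mono) auto
  have f1: "\<gamma>^3*P*rr^2*(8*dd^2) \<le> (\<gamma>*K/4)*dd^2"
  proof -
    have "\<gamma>^3*P*rr^2*(8*dd^2) = (\<gamma>*dd^2)*((8*\<gamma>^2*P)*rr^2)" by (simp add: algebra_simps power2_eq_square power3_eq_cube)
    also have "\<dots> \<le> (\<gamma>*dd^2)*((K/4)*1)"
    proof (intro mult_left_mono mult_mono)
      show "rr^2 \<le> 1" using rr by (simp add: power_le_one)
    qed (use g K Pn in auto)
    finally show ?thesis by (simp add: mult_ac)
  qed
  have sum: "\<gamma>^3*(64*kp^2/K)*rr^2*(1+Y2^2) + \<gamma>^3*(3*kp)*rr^2*(1+Y2^2) = \<gamma>^3*P*rr^2*(1+Y2^2)"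
    unfolding P by (simp add: algebra_simps)
  have "DD^2 + 8*\<gamma>^2*DD*(kp*rr*(1+Y2)) + 3*\<gamma>^4*(kp*rr^2*(1+Y2^2))
      \<le> e*dd^2 + (\<gamma>*K)/2*dd^2 + \<gamma>^3*P*rr^2*(1+8*X4+8*dd^2)"
    using a b1 b2 b3 d1 e1 sum by linarith
  also have "\<dots> = e*dd^2 + (\<gamma>*K)/2*dd^2 + \<gamma>^3*P*(1+8*X4)*rr^2 + \<gamma>^3*P*rr^2*(8*dd^2)"
    by (simp add: algebra_simps)
  also have "\<dots> \<le> e*dd^2 + (\<gamma>*K)/2*dd^2 + \<gamma>^3*P*(1+8*X4)*rr^2 + (\<gamma>*K/4)*dd^2"
    using f1 by linarith
  also have "\<dots> = (1-\<gamma>*K/4)*dd^2 + \<gamma>^3*P*(1+8*X4)*rr^2" unfolding e_def by (simp add: algebra_simps)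
  finally show ?thesis .
qed



lemma sf_prob: "prob_space M \<Longrightarrow> sigma_finite_measure M"
  by (simp add: prob_space_imp_sigma_finite)

lemma prob_pair: "prob_space M \<Longrightarrow> prob_space N \<Longrightarrow> prob_space (M \<Otimes>\<^sub>M N)"
proof -
  assume "prob_space M" "prob_space N"
  then interpret pair_prob_space M N by (simp add: pair_prob_space_def pair_sigma_finite_def prob_space_imp_sigma_finite)
  show ?thesis by unfold_locales
qed

lemma Om_upd_z:
  fixes \<nu> :: "(real^'d) measure" and QQ :: "(real^'n) measure" and i :: nat
  assumes nu: "prob_space \<nu>" and QQ: "prob_space QQ"
  defines "\<Omega> \<equiv> \<nu> \<Otimes>\<^sub>M (PiM (UNIV::nat set) (\<lambda>_. std_gauss_vec :: (real^'d) measure) \<Otimes>\<^sub>M PiM (UNIV::nat set) (\<lambda>_. QQ))"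
  shows "(\<lambda>(\<omega>, p). (fst \<omega>, (fst (snd \<omega>))(i:=p), snd (snd \<omega>))) \<in> measurable (\<Omega> \<Otimes>\<^sub>M std_gauss_vec) \<Omega>"
    and "G \<in> borel_measurable \<Omega> \<Longrightarrow> (\<integral>\<^sup>+\<omega>. G \<omega> \<partial>\<Omega>) = (\<integral>\<^sup>+\<omega>. \<integral>\<^sup>+p. G (fst \<omega>, (fst (snd \<omega>))(i:=p), snd (snd \<omega>)) \<partial>std_gauss_vec \<partial>\<Omega>)"
proof -
  have G: "prob_space (std_gauss_vec :: (real^'d) measure)" by (rule SG_prob)
  have PZ: "prob_space (PiM (UNIV::nat set) (\<lambda>_. std_gauss_vec :: (real^'d) measure))" by (intro prob_space_PiM G)
  have PU: "prob_space (PiM (UNIV::nat set) (\<lambda>_. QQ))" by (intro prob_space_PiM QQ)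
  have PZU: "prob_space (PiM (UNIV::nat set) (\<lambda>_. std_gauss_vec :: (real^'d) measure) \<Otimes>\<^sub>M PiM (UNIV::nat set) (\<lambda>_. QQ))"
    using PZ PU by (rule prob_pair)
  have i1: "upd_inv (PiM (UNIV::nat set) (\<lambda>_. std_gauss_vec :: (real^'d) measure)) std_gauss_vec (\<lambda>X v. X(i:=v))"
    by (rule upd_inv_PiM[OF G])
  have i2: "upd_inv (PiM (UNIV::nat set) (\<lambda>_. std_gauss_vec :: (real^'d) measure) \<Otimes>\<^sub>M PiM (UNIV::nat set) (\<lambda>_. QQ)) std_gauss_vec
      (\<lambda>(x,y) p. (x(i:=p), y))"
    by (rule upd_inv_left[OF sf_prob[OF PZ] sf_prob[OF PU] sf_prob[OF G] i1])
  have i3: "upd_inv \<Omega> std_gauss_vec (\<lambda>(x,y) p. (x, (\<lambda>(x,y) p. (x(i:=p), y)) y p))"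
    unfolding \<Omega>_def by (rule upd_inv_right[OF sf_prob[OF nu] sf_prob[OF PZU] sf_prob[OF G] i2])
  have eq: "(\<lambda>(x,y) p. (x, (\<lambda>(x,y) p. (x(i:=p), y)) y p)) = (\<lambda>\<omega> p. (fst \<omega>, (fst (snd \<omega>))(i:=p), snd (snd \<omega>)))"
    by (auto simp: fun_eq_iff split: prod.splits)
  have i4: "upd_inv \<Omega> std_gauss_vec (\<lambda>\<omega> p. (fst \<omega>, (fst (snd \<omega>))(i:=p), snd (snd \<omega>)))"
    using i3 unfolding eq .
  then show "(\<lambda>(\<omega>, p). (fst \<omega>, (fst (snd \<omega>))(i:=p), snd (snd \<omega>))) \<in> measurable (\<Omega> \<Otimes>\<^sub>M std_gauss_vec) \<Omega>"
    by (simp add: upd_inv_def)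
  show "G \<in> borel_measurable \<Omega> \<Longrightarrow> (\<integral>\<^sup>+\<omega>. G \<omega> \<partial>\<Omega>) = (\<integral>\<^sup>+\<omega>. \<integral>\<^sup>+p. G (fst \<omega>, (fst (snd \<omega>))(i:=p), snd (snd \<omega>)) \<partial>std_gauss_vec \<partial>\<Omega>)"
    using i4 by (simp add: upd_inv_def)
qed

lemma Om_upd_u:
  fixes \<nu> :: "(real^'d) measure" and QQ :: "(real^'n) measure" and i :: nat
  assumes nu: "prob_space \<nu>" and QQ: "prob_space QQ"
  defines "\<Omega> \<equiv> \<nu> \<Otimes>\<^sub>M (PiM (UNIV::nat set) (\<lambda>_. std_gauss_vec :: (real^'d) measure) \<Otimes>\<^sub>M PiM (UNIV::nat set) (\<lambda>_. QQ))"
  shows "(\<lambda>(\<omega>, p). (fst \<omega>, fst (snd \<omega>), (snd (snd \<omega>))(i:=p))) \<in> measurable (\<Omega> \<Otimes>\<^sub>M QQ) \<Omega>"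
    and "G \<in> borel_measurable \<Omega> \<Longrightarrow> (\<integral>\<^sup>+\<omega>. G \<omega> \<partial>\<Omega>) = (\<integral>\<^sup>+\<omega>. \<integral>\<^sup>+p. G (fst \<omega>, fst (snd \<omega>), (snd (snd \<omega>))(i:=p)) \<partial>QQ \<partial>\<Omega>)"
proof -
  have G: "prob_space (std_gauss_vec :: (real^'d) measure)" by (rule SG_prob)
  have PZ: "prob_space (PiM (UNIV::nat set) (\<lambda>_. std_gauss_vec :: (real^'d) measure))" by (intro prob_space_PiM G)
  have PU: "prob_space (PiM (UNIV::nat set) (\<lambda>_. QQ))" by (intro prob_space_PiM QQ)
  have PZU: "prob_space (PiM (UNIV::nat set) (\<lambda>_. std_gauss_vec :: (real^'d) measure) \<Otimes>\<^sub>M PiM (UNIV::nat set) (\<lambda>_. QQ))"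
    using PZ PU by (rule prob_pair)
  have i1: "upd_inv (PiM (UNIV::nat set) (\<lambda>_. QQ)) QQ (\<lambda>X v. X(i:=v))"
    by (rule upd_inv_PiM[OF QQ])
  have i2: "upd_inv (PiM (UNIV::nat set) (\<lambda>_. std_gauss_vec :: (real^'d) measure) \<Otimes>\<^sub>M PiM (UNIV::nat set) (\<lambda>_. QQ)) QQ
      (\<lambda>(x,y) p. (x, y(i:=p)))"
    by (rule upd_inv_right[OF sf_prob[OF PZ] sf_prob[OF PU] sf_prob[OF QQ] i1])
  have i3: "upd_inv \<Omega> QQ (\<lambda>(x,y) p. (x, (\<lambda>(x,y) p. (x, y(i:=p))) y p))"
    unfolding \<Omega>_def by (rule upd_inv_right[OF sf_prob[OF nu] sf_prob[OF PZU] sf_prob[OF QQ] i2])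
  have eq: "(\<lambda>(x,y) p. (x, (\<lambda>(x,y) p. (x, y(i:=p))) y p)) = (\<lambda>\<omega> p. (fst \<omega>, fst (snd \<omega>), (snd (snd \<omega>))(i:=p)))"
    by (auto simp: fun_eq_iff split: prod.splits)
  have i4: "upd_inv \<Omega> QQ (\<lambda>\<omega> p. (fst \<omega>, fst (snd \<omega>), (snd (snd \<omega>))(i:=p)))"
    using i3 unfolding eq .
  then show "(\<lambda>(\<omega>, p). (fst \<omega>, fst (snd \<omega>), (snd (snd \<omega>))(i:=p))) \<in> measurable (\<Omega> \<Otimes>\<^sub>M QQ) \<Omega>"
    by (simp add: upd_inv_def)
  show "G \<in> borel_measurable \<Omega> \<Longrightarrow> (\<integral>\<^sup>+\<omega>. G \<omega> \<partial>\<Omega>) = (\<integral>\<^sup>+\<omega>. \<integral>\<^sup>+p. G (fst \<omega>, fst (snd \<omega>), (snd (snd \<omega>))(i:=p)) \<partial>QQ \<partial>\<Omega>)"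
    using i4 by (simp add: upd_inv_def)
qed



locale LS =
  fixes a :: "real^'d \<Rightarrow> real^'d"
    and b :: "real^'d \<Rightarrow> real^'n \<Rightarrow> real^'d"
    and Q :: "nat \<Rightarrow> (real^'n) measure"
    and \<nu> :: "(real^'d) measure"
    and \<beta> L K :: real and s :: nat and h :: real
  assumes beta: "\<beta> \<ge> 0"
    and QQp: "prob_space (Q (2 * s))" and QQs: "sets (Q (2 * s)) = sets borel"
    and b_meas: "(\<lambda>(x, u). b x u) \<in> borel_measurable (borel \<Otimes>\<^sub>M borel)"
    and unb: "\<And>x. integrable (Q (2 * s)) (\<lambda>u. b x u) \<and> (\<integral>u. b x u \<partial>Q (2 * s)) = a x"
    and lip: "\<And>x y. norm (a x - a y) \<le> L * norm (x - y)"
    and K: "K > 0"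
    and diss: "\<And>x y. inner (x - y) (a x - a y) \<le> - K * norm (x - y)^2"
    and a_cont: "continuous_on UNIV a"
    and nup: "prob_space \<nu>" and nus: "sets \<nu> = sets borel"
    and h: "h > 0"
begin

abbreviation "Om \<equiv> coupled_space \<nu> Q s"
abbreviation "O0 \<equiv> (Om0 :: ((real^'d) \<times> (nat \<Rightarrow> real^'d) \<times> (nat \<Rightarrow> real^'n)) measure)"

definition Xm :: "nat \<Rightarrow> (real^'d) \<times> (nat \<Rightarrow> real^'d) \<times> (nat \<Rightarrow> real^'n) \<Rightarrow> real^'d" where
  "Xm m \<omega> = coarse_chain \<beta> h (\<lambda>y j. a y) (fst \<omega>) (fst (snd \<omega>)) m"

definition Yd :: "nat \<Rightarrow> nat \<Rightarrow> (real^'d) \<times> (nat \<Rightarrow> real^'d) \<times> (nat \<Rightarrow> real^'n) \<Rightarrow> real^'d" where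
  "Yd \<delta> m \<omega> = coarse_chain \<beta> h (\<lambda>y j. b y (snd (snd \<omega>) (j + \<delta>))) (fst \<omega>) (fst (snd \<omega>)) m"

lemma Om_def': "Om = \<nu> \<Otimes>\<^sub>M (PiM (UNIV::nat set) (\<lambda>_. std_gauss_vec :: (real^'d) measure) \<Otimes>\<^sub>M PiM (UNIV::nat set) (\<lambda>_. Q (2 * s)))"
  unfolding coupled_space_def ..

lemma Om_prob: "prob_space Om"
  unfolding Om_def' by (intro prob_pair nup prob_space_PiM SG_prob QQp)

lemma meas_Om: "f \<in> borel_measurable O0 \<Longrightarrow> f \<in> borel_measurable Om"
  using measurable_cong_sets[OF sets_coupled[of \<nu> Q s, OF nus QQs] refl] by blast

lemma a_meas: "a \<in> borel_measurable borel"
  using a_cont by (rule borel_measurable_continuous_onI)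

lemma b_comp: "f \<in> borel_measurable M \<Longrightarrow> g \<in> borel_measurable M \<Longrightarrow> (\<lambda>\<omega>. b (f \<omega>) (g \<omega>)) \<in> borel_measurable M"
  using measurable_compose[OF measurable_Pair b_meas, of f M g] by simp

lemma Xm_meas: "Xm m \<in> borel_measurable O0"
proof -
  have "(\<lambda>\<omega>. coarse_chain \<beta> h ((\<lambda>\<omega> y j. a y) \<omega>) (fst \<omega>) (fst (snd \<omega>)) m) \<in> borel_measurable O0"
  proof (rule cc_meas)
    fix j and f :: "_ \<Rightarrow> real^'d" assume "f \<in> borel_measurable O0"
    then show "(\<lambda>\<omega>. a (f \<omega>)) \<in> borel_measurable O0" using measurable_compose[OF _ a_meas] by blast
  qed (rule Om0_x0, rule Om0_z)
  then show ?thesis unfolding Xm_def[abs_def] by simp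
qed

lemma Yd_meas: "Yd \<delta> m \<in> borel_measurable O0"
proof -
  have "(\<lambda>\<omega>. coarse_chain \<beta> h ((\<lambda>\<omega> y j. b y (snd (snd \<omega>) (j + \<delta>))) \<omega>) (fst \<omega>) (fst (snd \<omega>)) m) \<in> borel_measurable O0"
  proof (rule cc_meas)
    fix j and f :: "_ \<Rightarrow> real^'d" assume "f \<in> borel_measurable O0"
    then show "(\<lambda>\<omega>. b (f \<omega>) (snd (snd \<omega>) (j + \<delta>))) \<in> borel_measurable O0"
      by (intro b_comp Om0_u)
  qed (rule Om0_x0, rule Om0_z)
  then show ?thesis unfolding Yd_def[abs_def] by simp
qed

lemma Xm_upd:
  "Xm (Suc m) (fst \<omega>, ((fst (snd \<omega>))(2*m+1 := p1))(2*m+2 := p2), snd (snd \<omega>))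
     = Xm m \<omega> + (2*h) *\<^sub>R a (Xm m \<omega>) + (\<beta> * sqrt h) *\<^sub>R (p1 + p2)"
proof -
  have "coarse_chain \<beta> h (\<lambda>y j. a y) (fst \<omega>) (((fst (snd \<omega>))(2*m+1 := p1))(2*m+2 := p2)) m
      = coarse_chain \<beta> h (\<lambda>y j. a y) (fst \<omega>) (fst (snd \<omega>)) m"
    by (rule cc_z_local) auto
  then show ?thesis unfolding Xm_def by simp
qed

lemma Xm_u: "Xm m (x0, z, u') = Xm m (x0, z, u)"
  unfolding Xm_def by simp

lemma Yd_upd:
  "Yd \<delta> (Suc m) (fst \<omega>, fst (snd \<omega>), (snd (snd \<omega>))(2*m+\<delta> := v))
     = Yd \<delta> m \<omega> + (2*h) *\<^sub>R b (Yd \<delta> m \<omega>) v + (\<beta> * sqrt h) *\<^sub>R (fst (snd \<omega>) (2*m+1) + fst (snd \<omega>) (2*m+2))"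
proof -
  have "coarse_chain \<beta> h (\<lambda>y j. b y (((snd (snd \<omega>))(2*m+\<delta> := v)) (j + \<delta>))) (fst \<omega>) (fst (snd \<omega>)) m
      = coarse_chain \<beta> h (\<lambda>y j. b y (snd (snd \<omega>) (j + \<delta>))) (fst \<omega>) (fst (snd \<omega>)) m"
    by (rule cc_F_local) auto
  then show ?thesis unfolding Yd_def by simp
qed

end



lemma nn_lin2:
  assumes P: "prob_space P" and f: "f \<in> borel_measurable P" and fn: "\<And>x. 0 \<le> f x" and a: "0 \<le> a1" and b: "0 \<le> b"
  shows "(\<integral>\<^sup>+x. ennreal (a1 * f x + b) \<partial>P) = ennreal a1 * (\<integral>\<^sup>+x. ennreal (f x) \<partial>P) + ennreal b"
proof -
  interpret prob_space P by fact
  have "(\<integral>\<^sup>+x. ennreal (a1 * f x + b) \<partial>P) = (\<integral>\<^sup>+x. ennreal a1 * ennreal (f x) + ennreal b \<partial>P)"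
    using fn a b by (intro nn_integral_cong) (simp add: ennreal_plus ennreal_mult)
  also have "\<dots> = (\<integral>\<^sup>+x. ennreal a1 * ennreal (f x) \<partial>P) + (\<integral>\<^sup>+x. ennreal b \<partial>P)"
    using f by (intro nn_integral_add) auto
  also have "(\<integral>\<^sup>+x. ennreal a1 * ennreal (f x) \<partial>P) = ennreal a1 * (\<integral>\<^sup>+x. ennreal (f x) \<partial>P)"
    using f by (intro nn_integral_cmult) auto
  also have "(\<integral>\<^sup>+x. ennreal b \<partial>P) = ennreal b"
    by (simp add: emeasure_space_1)
  finally show ?thesis .
qed

lemma enn_rec:
  fixes e :: "nat \<Rightarrow> ennreal"
  assumes e0: "e 0 \<le> ennreal M" and st: "\<And>m. e (Suc m) \<le> ennreal \<rho> * e m + ennreal B"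
    and r: "0 \<le> \<rho>" and B: "0 \<le> B" and M: "0 \<le> M" and fp: "\<rho>*M + B \<le> M"
  shows "e m \<le> ennreal M"
proof (induction m)
  case 0 show ?case by (rule e0)
next
  case (Suc m)
  have "e (Suc m) \<le> ennreal \<rho> * e m + ennreal B" by (rule st)
  also have "\<dots> \<le> ennreal \<rho> * ennreal M + ennreal B" using Suc by (intro add_mono mult_left_mono) auto
  also have "\<dots> = ennreal (\<rho>*M + B)" using r B M by (simp add: ennreal_mult ennreal_plus)
  also have "\<dots> \<le> ennreal M" using fp by (rule ennreal_leI)
  finally show ?case .
qed

context LS begin

lemma norm4_meas: "(\<lambda>x::real^'d. ennreal (norm x^4)) \<in> borel_measurable borel" by measurable

lemma Xm_step:
  fixes bb g2 g4 R B0 :: real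
  defines "bb \<equiv> \<beta>^2" and "g2 \<equiv> real CARD('d)" and "g4 \<equiv> 3 * real CARD('d)^2"
    and "R \<equiv> 2*norm (a 0)^2/K + 2*norm (a 0)^2"
    and "B0 \<equiv> (2*R+8*bb*g2)^2/(2*K) + R^2 + 8*bb*g2*R + 2*bb^2*(g2^2+g4)"
  assumes g: "2*h \<le> 1" "2*h*K \<le> 1" "2*h*(4*L^2) \<le> K"
  shows "(\<integral>\<^sup>+\<omega>. ennreal (norm (Xm (Suc m) \<omega>)^4) \<partial>Om)
     \<le> ennreal (1 - 2*h*K/2) * (\<integral>\<^sup>+\<omega>. ennreal (norm (Xm m \<omega>)^4) \<partial>Om) + ennreal (2*h*B0)"
proof -
  let ?SG = "std_gauss_vec :: (real^'d) measure"
  interpret SG: prob_space ?SG by (rule SG_prob)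
  define G where "G \<omega> = ennreal (norm (Xm (Suc m) \<omega>)^4)" for \<omega>
  define T1 where "T1 \<omega> p = (fst \<omega>, (fst (snd \<omega>))(2*m+1:=p), snd (snd \<omega>))" for \<omega> :: "(real^'d) \<times> (nat \<Rightarrow> real^'d) \<times> (nat \<Rightarrow> real^'n)" and p
  define T2 where "T2 \<omega> p = (fst \<omega>, (fst (snd \<omega>))(2*m+2:=p), snd (snd \<omega>))" for \<omega> :: "(real^'d) \<times> (nat \<Rightarrow> real^'d) \<times> (nat \<Rightarrow> real^'n)" and p
  have Gm: "G \<in> borel_measurable Om"
    unfolding G_def using measurable_compose[OF Xm_meas norm4_meas] by (intro meas_Om) simp
  note UZ1 = Om_upd_z[OF nup QQp, where i="2*m+1", folded Om_def' T1_def]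
  note UZ2 = Om_upd_z[OF nup QQp, where i="2*m+2", folded Om_def' T2_def]
  have E1: "(\<integral>\<^sup>+\<omega>. G \<omega> \<partial>Om) = (\<integral>\<^sup>+\<omega>. \<integral>\<^sup>+p2. G (T2 \<omega> p2) \<partial>?SG \<partial>Om)"
    using UZ2(2)[OF Gm] unfolding T2_def .
  define H where "H \<omega> = (\<integral>\<^sup>+p2. G (T2 \<omega> p2) \<partial>?SG)" for \<omega>
  have Hm: "H \<in> borel_measurable Om"
  proof -
    have "(\<lambda>(\<omega>, p). G (T2 \<omega> p)) \<in> borel_measurable (Om \<Otimes>\<^sub>M ?SG)"
      using measurable_comp[OF UZ2(1) Gm] unfolding T2_def by (simp add: o_def case_prod_beta)
    then show ?thesis unfolding H_def by (rule SG.borel_measurable_nn_integral)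
  qed
  have E2: "(\<integral>\<^sup>+\<omega>. H \<omega> \<partial>Om) = (\<integral>\<^sup>+\<omega>. \<integral>\<^sup>+p1. H (T1 \<omega> p1) \<partial>?SG \<partial>Om)"
    using UZ1(2)[OF Hm] unfolding T1_def .
  define A where "A \<omega> = Xm m \<omega> + (2*h) *\<^sub>R a (Xm m \<omega>)" for \<omega>
  define c where "c = \<beta> * sqrt h"
  have HT: "H (T1 \<omega> p1) = (\<integral>\<^sup>+p2. ennreal (norm (A \<omega> + c *\<^sub>R (p1 + p2))^4) \<partial>?SG)" for \<omega> p1
  proof -
    have eqT: "T2 (T1 \<omega> p1) p2 = (fst \<omega>, ((fst (snd \<omega>))(2*m+1 := p1))(2*m+2 := p2), snd (snd \<omega>))" for p2
      unfolding T1_def T2_def by simp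
    have "G (T2 (T1 \<omega> p1) p2) = ennreal (norm (A \<omega> + c *\<^sub>R (p1 + p2))^4)" for p2
      unfolding G_def eqT Xm_upd A_def c_def ..
    then show ?thesis unfolding H_def by simp
  qed
  have c2: "c^2 = bb*(2*h)/2" unfolding c_def bb_def using h beta by (simp add: power_mult_distrib)
  have c4: "c^4 = (c^2)^2" by (simp flip: power_mult)
  have Rn: "0 \<le> R" unfolding R_def using K by auto
  have pw: "(\<integral>\<^sup>+p1. H (T1 \<omega> p1) \<partial>?SG) \<le> ennreal ((1 - 2*h*K/2) * norm (Xm m \<omega>)^4 + 2*h*B0)" for \<omega>
  proof -
    have "(\<integral>\<^sup>+p1. H (T1 \<omega> p1) \<partial>?SG) \<le> ennreal (norm (A \<omega>)^4 + 16*c^2*g2*norm (A \<omega>)^2 + c^4*(8*g2^2 + 6*g4))"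
      unfolding HT g2_def g4_def by (rule gauss2_step)
    also have "\<dots> \<le> ennreal ((1 - 2*h*K/2) * norm (Xm m \<omega>)^4 + 2*h*B0)"
    proof (rule ennreal_leI)
      have n4: "norm (A \<omega>)^4 = (norm (A \<omega>)^2)^2" by (simp flip: power_mult)
      have xn4: "norm (Xm m \<omega>)^4 = (norm (Xm m \<omega>)^2)^2" by (simp flip: power_mult)
      have A2: "norm (A \<omega>)^2 \<le> (1-(2*h)*K)*norm (Xm m \<omega>)^2 + (2*h)*R"
        unfolding A_def R_def using g h by (intro A_bound[OF lip diss K]) auto
      have "(norm (A \<omega>)^2)^2 + 16*(c^2)*g2*norm (A \<omega>)^2 + (c^2)^2*(8*g2^2 + 6*g4)
          \<le> (1-(2*h)*K/2)*(norm (Xm m \<omega>)^2)^2 + (2*h)*B0"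
        unfolding B0_def
        by (rule X_real[OF K _ g(1) g(2) _ A2]) (use h beta in \<open>auto simp: bb_def g2_def g4_def Rn c2\<close>)
      then show "norm (A \<omega>)^4 + 16*c^2*g2*norm (A \<omega>)^2 + c^4*(8*g2^2 + 6*g4) \<le> (1 - 2*h*K/2) * norm (Xm m \<omega>)^4 + 2*h*B0"
        unfolding c4 n4[symmetric] xn4[symmetric] .
    qed
    finally show ?thesis .
  qed
  have "(\<integral>\<^sup>+\<omega>. ennreal (norm (Xm (Suc m) \<omega>)^4) \<partial>Om) = (\<integral>\<^sup>+\<omega>. \<integral>\<^sup>+p1. H (T1 \<omega> p1) \<partial>?SG \<partial>Om)"
    using E1 E2 unfolding H_def G_def by simp
  also have "\<dots> \<le> (\<integral>\<^sup>+\<omega>. ennreal ((1 - 2*h*K/2) * norm (Xm m \<omega>)^4 + 2*h*B0) \<partial>Om)"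
    by (intro nn_integral_mono pw)
  also have "\<dots> = ennreal (1 - 2*h*K/2) * (\<integral>\<^sup>+\<omega>. ennreal (norm (Xm m \<omega>)^4) \<partial>Om) + ennreal (2*h*B0)"
  proof (rule nn_lin2[OF Om_prob])
    show "(\<lambda>\<omega>. norm (Xm m \<omega>)^4) \<in> borel_measurable Om"
      by (intro meas_Om borel_measurable_power) (rule measurable_compose[OF Xm_meas borel_measurable_norm])
    show "0 \<le> 1 - 2*h*K/2" using g K by auto
    show "0 \<le> 2*h*B0" unfolding B0_def using h K Rn by (auto simp: bb_def g2_def g4_def)
    show "\<And>x. 0 \<le> norm (Xm m x)^4" by simp
  qed
  finally show ?thesis .
qed

end



lemma nn_lin3g:
  assumes P: "prob_space P" and f: "f \<in> borel_measurable P" and g: "g \<in> borel_measurable P"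
    and fn: "\<And>x. 0 \<le> f x" and gn: "\<And>x. 0 \<le> g x" and a1: "0 \<le> a1" and a: "0 \<le> a" and b: "0 \<le> b"
  shows "(\<integral>\<^sup>+x. ennreal (a1 * f x + a * g x + b) \<partial>P) = ennreal a1 * (\<integral>\<^sup>+x. ennreal (f x) \<partial>P) + ennreal a * (\<integral>\<^sup>+x. ennreal (g x) \<partial>P) + ennreal b"
proof -
  have "(\<integral>\<^sup>+x. ennreal (a1 * f x + a * g x + b) \<partial>P) = (\<integral>\<^sup>+x. ennreal (a1 * f x) \<partial>P) + ennreal a * (\<integral>\<^sup>+x. ennreal (g x) \<partial>P) + ennreal b"
    using nn_lin3[OF P _ g _ gn a b, of "\<lambda>x. a1 * f x"] f fn a1 by simp
  also have "(\<integral>\<^sup>+x. ennreal (a1 * f x) \<partial>P) = ennreal a1 * (\<integral>\<^sup>+x. ennreal (f x) \<partial>P)"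
    using f fn a1 by (subst nn_integral_cmult[symmetric]) (auto simp: ennreal_mult)
  finally show ?thesis .
qed

lemma pow4_sum: fixes p q :: real assumes "0 \<le> p" "0 \<le> q" shows "(p+q)^4 \<le> 8*p^4 + 8*q^4"
proof -
  have s: "(x+y)^2 \<le> 2*x^2 + 2*y^2" for x y :: real
  proof -
    have "0 \<le> (x-y)^2" by simp
    then show ?thesis by (simp add: power2_eq_square algebra_simps)
  qed
  have "(p+q)^4 = ((p+q)^2)^2" by (simp flip: power_mult)
  also have "\<dots> \<le> (2*p^2 + 2*q^2)^2" using s[of p q] by (intro power_mono) auto
  also have "\<dots> \<le> 2*(2*p^2)^2 + 2*(2*q^2)^2" by (rule s)
  also have "\<dots> = 8*p^4 + 8*q^4" by (simp add: power_mult_distrib flip: power_mult)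
  finally show ?thesis .
qed

lemma half4: fixes u v :: "'a::real_normed_vector"
  shows "norm ((1/2) *\<^sub>R (u + v))^4 \<le> (norm u^4 + norm v^4)/2"
proof -
  have s: "((x+y)/2)^2 \<le> (x^2 + y^2)/2" for x y :: real
  proof -
    have "0 \<le> (x-y)^2" by simp
    then show ?thesis by (simp add: power2_eq_square field_simps)
  qed
  have "norm ((1/2) *\<^sub>R (u + v)) \<le> (norm u + norm v)/2" using norm_triangle_ineq[of u v] by simp
  then have "norm ((1/2) *\<^sub>R (u + v))^4 \<le> ((norm u + norm v)/2)^4" by (intro power_mono) auto
  also have "\<dots> = (((norm u + norm v)/2)^2)^2" by (simp flip: power_mult)
  also have "\<dots> \<le> ((norm u^2 + norm v^2)/2)^2" using s by (intro power_mono) auto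
  also have "\<dots> \<le> ((norm u^2)^2 + (norm v^2)^2)/2" by (rule s)
  also have "\<dots> = (norm u^4 + norm v^4)/2" by (simp flip: power_mult)
  finally show ?thesis .
qed

context LS begin

lemma Xm0: "(\<integral>\<^sup>+\<omega>. ennreal (norm (Xm 0 \<omega>)^4) \<partial>Om) = (\<integral>\<^sup>+x. ennreal (norm x^4) \<partial>\<nu>)"
proof -
  let ?N = "PiM (UNIV::nat set) (\<lambda>_. std_gauss_vec :: (real^'d) measure) \<Otimes>\<^sub>M PiM (UNIV::nat set) (\<lambda>_. Q (2 * s))"
  have Np: "prob_space ?N" by (intro prob_pair prob_space_PiM SG_prob QQp)
  interpret N: prob_space ?N by (rule Np)
  interpret nu: prob_space \<nu> by (rule nup)
  have fm: "(\<lambda>\<omega>. ennreal (norm (fst \<omega>)^4)) \<in> borel_measurable (\<nu> \<Otimes>\<^sub>M ?N)"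
  proof -
    have "(\<lambda>x. ennreal (norm x^4)) \<in> borel_measurable \<nu>"
      using norm4_meas measurable_cong_sets[OF nus refl] by blast
    then show ?thesis by (rule measurable_compose[OF measurable_fst])
  qed
  have "(\<integral>\<^sup>+\<omega>. ennreal (norm (Xm 0 \<omega>)^4) \<partial>Om) = (\<integral>\<^sup>+\<omega>. ennreal (norm (fst \<omega>)^4) \<partial>(\<nu> \<Otimes>\<^sub>M ?N))"
    unfolding Om_def' Xm_def by simp
  also have "\<dots> = (\<integral>\<^sup>+x. \<integral>\<^sup>+w. ennreal (norm (fst (x,w))^4) \<partial>?N \<partial>\<nu>)"
    by (rule N.nn_integral_fst[symmetric, OF fm])
  also have "\<dots> = (\<integral>\<^sup>+x. ennreal (norm x^4) \<partial>\<nu>)"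
    by (simp add: N.emeasure_space_1)
  finally show ?thesis .
qed

lemma X_bound:
  fixes bb g2 g4 R B0 Mx :: real
  defines "bb \<equiv> \<beta>^2" and "g2 \<equiv> real CARD('d)" and "g4 \<equiv> 3 * real CARD('d)^2"
    and "R \<equiv> 2*norm (a 0)^2/K + 2*norm (a 0)^2"
    and "B0 \<equiv> (2*R+8*bb*g2)^2/(2*K) + R^2 + 8*bb*g2*R + 2*bb^2*(g2^2+g4)"
  assumes g: "2*h \<le> 1" "2*h*K \<le> 1" "2*h*(4*L^2) \<le> K"
    and M0: "(\<integral>\<^sup>+x. ennreal (norm x^4) \<partial>\<nu>) \<le> ennreal Mx" and Mx: "2*B0/K \<le> Mx"
  shows "(\<integral>\<^sup>+\<omega>. ennreal (norm (Xm m \<omega>)^4) \<partial>Om) \<le> ennreal Mx"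
proof (rule enn_rec[where e="\<lambda>m. (\<integral>\<^sup>+\<omega>. ennreal (norm (Xm m \<omega>)^4) \<partial>Om)"])
  show "(\<integral>\<^sup>+\<omega>. ennreal (norm (Xm 0 \<omega>)^4) \<partial>Om) \<le> ennreal Mx" unfolding Xm0 by (rule M0)
  show "\<And>m. (\<integral>\<^sup>+\<omega>. ennreal (norm (Xm (Suc m) \<omega>)^4) \<partial>Om) \<le> ennreal (1 - 2*h*K/2) * (\<integral>\<^sup>+\<omega>. ennreal (norm (Xm m \<omega>)^4) \<partial>Om) + ennreal (2*h*B0)"
    unfolding B0_def R_def bb_def g2_def g4_def by (rule Xm_step[OF g])
  show "0 \<le> 1 - 2*h*K/2" using g K by auto
  have Rn: "0 \<le> R" unfolding R_def using K by auto
  have B0n: "0 \<le> B0" unfolding B0_def using K Rn by (auto simp: bb_def g2_def g4_def)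
  show "0 \<le> 2*h*B0" using h B0n by simp
  show Mn: "0 \<le> Mx" using B0n K Mx by (meson divide_nonneg_pos less_le mult_nonneg_nonneg order_trans zero_le_numeral)
  have "2*h*B0 \<le> 2*h*(K/2*Mx)"
  proof -
    have "B0 \<le> K/2*Mx" using Mx K by (simp add: field_simps)
    then show ?thesis using h by (intro mult_left_mono) auto
  qed
  then show "(1 - 2*h*K/2)*Mx + 2*h*B0 \<le> Mx" by (simp add: algebra_simps)
qed

end



context LS begin

lemma QQ_meas: "f \<in> borel_measurable borel \<Longrightarrow> f \<in> borel_measurable (Q (2 * s))"
  using measurable_cong_sets[OF QQs refl] by blast

lemma xi_mean: "integrable (Q (2 * s)) (\<lambda>u. A \<bullet> (b y u - a y)) \<and> (\<integral>u. A \<bullet> (b y u - a y) \<partial>Q (2 * s)) = 0"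
proof -
  interpret QQ: prob_space "Q (2 * s)" by (rule QQp)
  have ib: "integrable (Q (2 * s)) (\<lambda>u. b y u)" and eb: "(\<integral>u. b y u \<partial>Q (2 * s)) = a y" using unb by auto
  have e: "(\<lambda>u. A \<bullet> (b y u - a y)) = (\<lambda>u. A \<bullet> b y u - A \<bullet> a y)" by (simp add: inner_diff_right)
  have i1: "integrable (Q (2 * s)) (\<lambda>u. A \<bullet> b y u)" using ib by (rule integrable_inner_right)
  have i2: "integrable (Q (2 * s)) (\<lambda>u. A \<bullet> a y)" by simp
  show ?thesis unfolding e
  proof
    show "integrable (Q (2 * s)) (\<lambda>u. A \<bullet> b y u - A \<bullet> a y)" using i1 i2 by (rule Bochner_Integration.integrable_diff)
    have "(\<integral>u. A \<bullet> b y u - A \<bullet> a y \<partial>Q (2 * s)) = (\<integral>u. A \<bullet> b y u \<partial>Q (2 * s)) - (\<integral>u. A \<bullet> a y \<partial>Q (2 * s))"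
      using i1 i2 by (rule Bochner_Integration.integral_diff)
    also have "(\<integral>u. A \<bullet> b y u \<partial>Q (2 * s)) = A \<bullet> a y" using ib eb by simp
    also have "(\<integral>u. A \<bullet> a y \<partial>Q (2 * s)) = A \<bullet> a y" by (simp add: QQ.prob_space)
    finally show "(\<integral>u. A \<bullet> b y u - A \<bullet> a y \<partial>Q (2 * s)) = 0" by simp
  qed
qed

lemma Yd_step:
  fixes kp P rr :: real
  assumes g: "2*h \<le> 1" "2*h*K \<le> 1" "2*h*L^2 \<le> K" "8*(2*h)^2*P \<le> K/4"
    and kp: "0 \<le> kp" and P: "P = 64*kp^2/K + 3*kp" and rr: "0 < rr" "rr \<le> 1"
    and A3': "\<And>x. (\<integral>\<^sup>+u. ennreal (norm (b x u - a x)^2) \<partial>Q (2 * s)) \<le> ennreal (kp*rr*(1 + norm x^2))"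
    and A4': "\<And>x. (\<integral>\<^sup>+u. ennreal (norm (b x u - a x)^4) \<partial>Q (2 * s)) \<le> ennreal (kp*rr^2*(1 + norm x^4))"
  shows "(\<integral>\<^sup>+\<omega>. ennreal (norm (Yd \<delta> (Suc m) \<omega> - Xm (Suc m) \<omega>)^4) \<partial>Om)
     \<le> ennreal (1 - 2*h*K/4) * (\<integral>\<^sup>+\<omega>. ennreal (norm (Yd \<delta> m \<omega> - Xm m \<omega>)^4) \<partial>Om)
       + ennreal ((2*h)^3*P*rr^2*8) * (\<integral>\<^sup>+\<omega>. ennreal (norm (Xm m \<omega>)^4) \<partial>Om) + ennreal ((2*h)^3*P*rr^2)"
proof -
  let ?QQ = "Q (2 * s)"
  interpret QQ: prob_space ?QQ by (rule QQp)
  define \<gamma> where "\<gamma> = 2*h"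
  have gp: "0 < \<gamma>" unfolding \<gamma>_def using h by simp
  define G where "G \<omega> = ennreal (norm (Yd \<delta> (Suc m) \<omega> - Xm (Suc m) \<omega>)^4)" for \<omega>
  define T where "T \<omega> p = (fst \<omega>, fst (snd \<omega>), (snd (snd \<omega>))(2*m+\<delta>:=p))" for \<omega> :: "(real^'d) \<times> (nat \<Rightarrow> real^'d) \<times> (nat \<Rightarrow> real^'n)" and p
  have Gm: "G \<in> borel_measurable Om"
    unfolding G_def
    by (intro meas_Om measurable_compose[OF _ norm4_meas] borel_measurable_diff Yd_meas Xm_meas)
  note UU = Om_upd_u[OF nup QQp, where i="2*m+\<delta>", folded Om_def' T_def]
  have E1: "(\<integral>\<^sup>+\<omega>. G \<omega> \<partial>Om) = (\<integral>\<^sup>+\<omega>. \<integral>\<^sup>+p. G (T \<omega> p) \<partial>?QQ \<partial>Om)"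
    using UU(2)[OF Gm] unfolding T_def .
  have pw: "(\<integral>\<^sup>+p. G (T \<omega> p) \<partial>?QQ) \<le> ennreal ((1 - \<gamma>*K/4) * norm (Yd \<delta> m \<omega> - Xm m \<omega>)^4 + (\<gamma>^3*P*rr^2*8) * norm (Xm m \<omega>)^4 + \<gamma>^3*P*rr^2)" for \<omega>
  proof -
    define Y where "Y = Yd \<delta> m \<omega>"
    define X where "X = Xm m \<omega>"
    define D where "D = (Y - X) + \<gamma> *\<^sub>R (a Y - a X)"
    define N where "N = (\<beta> * sqrt h) *\<^sub>R (fst (snd \<omega>) (2*m+1) + fst (snd \<omega>) (2*m+2))"
    have XS: "Xm (Suc m) (T \<omega> p) = X + \<gamma> *\<^sub>R a X + N" for p
      unfolding T_def X_def N_def \<gamma>_def Xm_def by simp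
    have YS: "Yd \<delta> (Suc m) (T \<omega> p) = Y + \<gamma> *\<^sub>R b Y p + N" for p
      unfolding T_def Y_def N_def \<gamma>_def by (rule Yd_upd)
    have GT: "G (T \<omega> p) = ennreal (norm (D + \<gamma> *\<^sub>R (b Y p - a Y))^4)" for p
    proof -
      have "Yd \<delta> (Suc m) (T \<omega> p) - Xm (Suc m) (T \<omega> p) = D + \<gamma> *\<^sub>R (b Y p - a Y)"
        unfolding XS YS D_def by (simp add: algebra_simps)
      then show ?thesis unfolding G_def by simp
    qed
    have vm: "(\<lambda>p. b Y p - a Y) \<in> borel_measurable ?QQ"
    proof (rule borel_measurable_diff)
      show "(\<lambda>p. b Y p) \<in> borel_measurable ?QQ"
        by (rule b_comp[of "\<lambda>_. Y" _ "\<lambda>p. p", simplified]) (rule QQ_meas, simp)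
    qed simp
    have m2n: "0 \<le> kp*rr*(1 + norm Y^2)" using kp rr by simp
    have m4n: "0 \<le> kp*rr^2*(1 + (norm Y^2)^2)" using kp rr by simp
    have A4'': "(\<integral>\<^sup>+u. ennreal (norm (b Y u - a Y)^4) \<partial>?QQ) \<le> ennreal (kp*rr^2*(1 + (norm Y^2)^2))"
      using A4'[of Y] by (simp flip: power_mult)
    have ms: "(\<integral>\<^sup>+p. ennreal (norm (D + \<gamma> *\<^sub>R (b Y p - a Y))^4) \<partial>?QQ)
        \<le> ennreal (norm D^4 + 8*\<gamma>^2*norm D^2*(kp*rr*(1 + norm Y^2)) + 3*\<gamma>^4*(kp*rr^2*(1 + (norm Y^2)^2)))"
      by (rule moment_step(1)[OF QQp vm xi_mean A3' m2n A4'' m4n])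
    have DD: "norm D^2 \<le> (1-\<gamma>*K)*norm (Y - X)^2"
      unfolding D_def by (rule D_bound[OF lip diss gp]) (use g in \<open>simp add: \<gamma>_def\<close>)
    have Y4: "(norm Y^2)^2 \<le> 8*norm X^4 + 8*(norm (Y - X)^2)^2"
    proof -
      have "norm Y \<le> norm X + norm (Y - X)" using norm_triangle_ineq[of X "Y - X"] by simp
      then have "norm Y^4 \<le> (norm X + norm (Y - X))^4" by (intro power_mono) auto
      also have "\<dots> \<le> 8*norm X^4 + 8*norm (Y - X)^4" by (rule pow4_sum) auto
      finally show ?thesis by (simp flip: power_mult)
    qed
    have dr: "(norm D^2)^2 + 8*\<gamma>^2*norm D^2*(kp*rr*(1 + norm Y^2)) + 3*\<gamma>^4*(kp*rr^2*(1 + (norm Y^2)^2))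
        \<le> (1-\<gamma>*K/4)*(norm (Y - X)^2)^2 + \<gamma>^3*P*(1+8*norm X^4)*rr^2"
      by (rule d_real[OF K gp _ _ _ _ DD _ kp P rr _ Y4]) (use g in \<open>simp_all add: \<gamma>_def\<close>)
    have "(\<integral>\<^sup>+p. G (T \<omega> p) \<partial>?QQ) = (\<integral>\<^sup>+p. ennreal (norm (D + \<gamma> *\<^sub>R (b Y p - a Y))^4) \<partial>?QQ)"
      unfolding GT ..
    also have "\<dots> \<le> ennreal ((1-\<gamma>*K/4)*(norm (Y - X)^2)^2 + \<gamma>^3*P*(1+8*norm X^4)*rr^2)"
    proof -
      have e4: "norm D^4 = (norm D^2)^2" by (simp flip: power_mult)
      show ?thesis using order_trans[OF ms[unfolded e4] ennreal_leI[OF dr]] .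
    qed
    also have "\<dots> = ennreal ((1 - \<gamma>*K/4) * norm (Yd \<delta> m \<omega> - Xm m \<omega>)^4 + (\<gamma>^3*P*rr^2*8) * norm (Xm m \<omega>)^4 + \<gamma>^3*P*rr^2)"
    proof -
      have "(norm (Y - X)^2)^2 = norm (Y - X)^4" by (simp flip: power_mult)
      then show ?thesis unfolding Y_def X_def by (simp add: algebra_simps)
    qed
    finally show ?thesis .
  qed
  have "(\<integral>\<^sup>+\<omega>. ennreal (norm (Yd \<delta> (Suc m) \<omega> - Xm (Suc m) \<omega>)^4) \<partial>Om) = (\<integral>\<^sup>+\<omega>. \<integral>\<^sup>+p. G (T \<omega> p) \<partial>?QQ \<partial>Om)"
    using E1 unfolding G_def .
  also have "\<dots> \<le> (\<integral>\<^sup>+\<omega>. ennreal ((1 - \<gamma>*K/4) * norm (Yd \<delta> m \<omega> - Xm m \<omega>)^4 + (\<gamma>^3*P*rr^2*8) * norm (Xm m \<omega>)^4 + \<gamma>^3*P*rr^2) \<partial>Om)"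
    by (intro nn_integral_mono pw)
  also have "\<dots> = ennreal (1 - \<gamma>*K/4) * (\<integral>\<^sup>+\<omega>. ennreal (norm (Yd \<delta> m \<omega> - Xm m \<omega>)^4) \<partial>Om)
       + ennreal (\<gamma>^3*P*rr^2*8) * (\<integral>\<^sup>+\<omega>. ennreal (norm (Xm m \<omega>)^4) \<partial>Om) + ennreal (\<gamma>^3*P*rr^2)"
  proof (rule nn_lin3g[OF Om_prob])
    show "(\<lambda>\<omega>. norm (Yd \<delta> m \<omega> - Xm m \<omega>)^4) \<in> borel_measurable Om"
      by (intro meas_Om borel_measurable_power) (rule measurable_compose[OF borel_measurable_diff[OF Yd_meas Xm_meas] borel_measurable_norm])
    show "(\<lambda>\<omega>. norm (Xm m \<omega>)^4) \<in> borel_measurable Om"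
      by (intro meas_Om borel_measurable_power) (rule measurable_compose[OF Xm_meas borel_measurable_norm])
    show "0 \<le> 1 - \<gamma>*K/4" using g(2) K unfolding \<gamma>_def by linarith
    have Pn: "0 \<le> P" unfolding P using kp K by auto
    show "0 \<le> \<gamma>^3*P*rr^2*8" using gp Pn by simp
    show "0 \<le> \<gamma>^3*P*rr^2" using gp Pn by simp
    show "\<And>x. 0 \<le> norm (Yd \<delta> m x - Xm m x)^4" by simp
    show "\<And>x. 0 \<le> norm (Xm m x)^4" by simp
  qed
  finally show ?thesis unfolding \<gamma>_def .
qed

end



context LS begin

lemma Yd_bound:
  fixes kp P rr Mx :: real
  assumes g: "2*h \<le> 1" "2*h*K \<le> 1" "2*h*L^2 \<le> K" "8*(2*h)^2*P \<le> K/4"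
    and kp: "0 \<le> kp" and P: "P = 64*kp^2/K + 3*kp" and rr: "0 < rr" "rr \<le> 1"
    and A3': "\<And>x. (\<integral>\<^sup>+u. ennreal (norm (b x u - a x)^2) \<partial>Q (2 * s)) \<le> ennreal (kp*rr*(1 + norm x^2))"
    and A4': "\<And>x. (\<integral>\<^sup>+u. ennreal (norm (b x u - a x)^4) \<partial>Q (2 * s)) \<le> ennreal (kp*rr^2*(1 + norm x^4))"
    and XB: "\<And>m. (\<integral>\<^sup>+\<omega>. ennreal (norm (Xm m \<omega>)^4) \<partial>Om) \<le> ennreal Mx" and Mx: "0 \<le> Mx"
  shows "(\<integral>\<^sup>+\<omega>. ennreal (norm (Yd \<delta> m \<omega> - Xm m \<omega>)^4) \<partial>Om) \<le> ennreal (4*(2*h)^2*P*rr^2*(1+8*Mx)/K)"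
proof (rule enn_rec[where e="\<lambda>m. (\<integral>\<^sup>+\<omega>. ennreal (norm (Yd \<delta> m \<omega> - Xm m \<omega>)^4) \<partial>Om)"
      and \<rho>="1 - 2*h*K/4" and B="(2*h)^3*P*rr^2*(1+8*Mx)"])
  have Pn: "0 \<le> P" unfolding P using kp K by auto
  show "(\<integral>\<^sup>+\<omega>. ennreal (norm (Yd \<delta> 0 \<omega> - Xm 0 \<omega>)^4) \<partial>Om) \<le> ennreal (4*(2*h)^2*P*rr^2*(1+8*Mx)/K)"
    unfolding Yd_def Xm_def by simp
  show "(\<integral>\<^sup>+\<omega>. ennreal (norm (Yd \<delta> (Suc m) \<omega> - Xm (Suc m) \<omega>)^4) \<partial>Om)
      \<le> ennreal (1 - 2*h*K/4) * (\<integral>\<^sup>+\<omega>. ennreal (norm (Yd \<delta> m \<omega> - Xm m \<omega>)^4) \<partial>Om) + ennreal ((2*h)^3*P*rr^2*(1+8*Mx))" for m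
  proof -
    have "(\<integral>\<^sup>+\<omega>. ennreal (norm (Yd \<delta> (Suc m) \<omega> - Xm (Suc m) \<omega>)^4) \<partial>Om)
      \<le> ennreal (1 - 2*h*K/4) * (\<integral>\<^sup>+\<omega>. ennreal (norm (Yd \<delta> m \<omega> - Xm m \<omega>)^4) \<partial>Om)
       + ennreal ((2*h)^3*P*rr^2*8) * (\<integral>\<^sup>+\<omega>. ennreal (norm (Xm m \<omega>)^4) \<partial>Om) + ennreal ((2*h)^3*P*rr^2)"
      by (rule Yd_step[OF g kp P rr A3' A4'])
    also have "\<dots> \<le> ennreal (1 - 2*h*K/4) * (\<integral>\<^sup>+\<omega>. ennreal (norm (Yd \<delta> m \<omega> - Xm m \<omega>)^4) \<partial>Om)
       + ennreal ((2*h)^3*P*rr^2*8) * ennreal Mx + ennreal ((2*h)^3*P*rr^2)"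
      by (intro add_mono mult_left_mono XB order_refl) auto
    finally have c1: "(\<integral>\<^sup>+\<omega>. ennreal (norm (Yd \<delta> (Suc m) \<omega> - Xm (Suc m) \<omega>)^4) \<partial>Om)
      \<le> ennreal (1 - 2*h*K/4) * (\<integral>\<^sup>+\<omega>. ennreal (norm (Yd \<delta> m \<omega> - Xm m \<omega>)^4) \<partial>Om)
       + (ennreal ((2*h)^3*P*rr^2*8) * ennreal Mx + ennreal ((2*h)^3*P*rr^2))" by (simp add: add.assoc)
    have eq: "ennreal ((2*h)^3*P*rr^2*8) * ennreal Mx + ennreal ((2*h)^3*P*rr^2) = ennreal ((2*h)^3*P*rr^2*(1+8*Mx))"
    proof -
      have "ennreal ((2*h)^3*P*rr^2*8) * ennreal Mx + ennreal ((2*h)^3*P*rr^2) = ennreal ((2*h)^3*P*rr^2*8*Mx + (2*h)^3*P*rr^2)"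
        using h Pn Mx by (simp add: ennreal_mult ennreal_plus)
      also have "(2*h)^3*P*rr^2*8*Mx + (2*h)^3*P*rr^2 = (2*h)^3*P*rr^2*(1+8*Mx)" by (simp add: algebra_simps)
      finally show ?thesis .
    qed
    show ?thesis using c1 unfolding eq .
  qed
  show "0 \<le> 1 - 2*h*K/4" using g(2) K by linarith
  show "0 \<le> (2*h)^3*P*rr^2*(1+8*Mx)" using h Pn Mx by simp
  show "0 \<le> 4*(2*h)^2*P*rr^2*(1+8*Mx)/K" using h Pn Mx K by simp
  show "(1 - 2*h*K/4) * (4*(2*h)^2*P*rr^2*(1+8*Mx)/K) + (2*h)^3*P*rr^2*(1+8*Mx) \<le> 4*(2*h)^2*P*rr^2*(1+8*Mx)/K"
    using K by (simp add: field_simps power2_eq_square power3_eq_cube)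
qed

end



theorem lemma12:
  fixes a :: "real^'d \<Rightarrow> real^'d"
    and b :: "real^'d \<Rightarrow> real^'n \<Rightarrow> real^'d"
    and Q :: "nat \<Rightarrow> (real^'n) measure"
    and \<nu> :: "(real^'d) measure"
    and \<beta> L K Ca1 Ca2 \<kappa> L04 :: real
    and \<sigma>2 \<sigma>4 :: "nat \<Rightarrow> real"
  assumes beta: "\<beta> \<ge> 0"
    and laws: "\<And>s. s \<ge> 1 \<Longrightarrow> prob_space (Q s) \<and> sets (Q s) = sets borel"
    and b_meas: "(\<lambda>(x, u). b x u) \<in> borel_measurable (borel \<Otimes>\<^sub>M borel)"
    and unbiased: "\<And>s x. s \<ge> 1 \<Longrightarrow> integrable (Q s) (\<lambda>u. b x u) \<and> (\<integral>u. b x u \<partial>Q s) = a x"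
    and A1_lip: "\<And>x y. norm (a x - a y) \<le> L * norm (x - y)"
    and A1_K: "K > 0"
    and A1_diss: "\<And>x y. inner (x - y) (a x - a y) \<le> - K * norm (x - y)^2"
    and A1_C2: "C2_bounded a Ca1 Ca2"
    and A3: "\<And>s x. s \<ge> 1 \<Longrightarrow>
        (\<integral>\<^sup>+u. ennreal (norm (b x u - a x)^2) \<partial>Q s) \<le> ennreal (\<sigma>2 s * (1 + norm x^2))"
    and A3_rate: "\<And>s. s \<ge> 1 \<Longrightarrow> \<sigma>2 s \<le> \<kappa> / real s"
    and A4: "\<And>s x. s \<ge> 1 \<Longrightarrow>
        (\<integral>\<^sup>+u. ennreal (norm (b x u - a x)^4) \<partial>Q s) \<le> ennreal (\<sigma>4 s * (1 + norm x^4))"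
    and A4_rate: "\<And>s. s \<ge> 1 \<Longrightarrow> \<sigma>4 s \<le> \<kappa> / (real s)^2"
    and A7: "\<And>x. norm (a x)^4 \<le> L04 * (1 + norm x^4)"
    and X0_law: "prob_space \<nu>" "sets \<nu> = sets borel"
    and X0_moment: "(\<integral>\<^sup>+x. ennreal (norm x^4) \<partial>\<nu>) < \<infinity>"
  shows "\<exists>h0 > 0. \<exists>C > 0. \<forall>s \<ge> 1. \<forall>h. 0 < h \<and> h < h0 \<longrightarrow>
           (\<forall>k. even k \<and> 2 \<le> k \<longrightarrow>
              (\<integral>\<^sup>+\<omega>. ennreal (norm (Xbar_fc \<beta> h b k \<omega> - Xc \<beta> h a k \<omega>)^4) \<partial>coupled_space \<nu> Q s)
                \<le> ennreal (C * h^2 / (real s)^2))"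
proof -
  have a_cont: "continuous_on UNIV a"
  proof -
    obtain Df where Df: "\<And>x. (a has_derivative Df x) (at x)"
      using A1_C2 unfolding C2_bounded_def by blast
    show ?thesis
      by (intro continuous_at_imp_continuous_on ballI has_derivative_continuous[OF Df])
  qed
  define kp where "kp = max \<kappa> 0"
  define P where "P = 64*kp^2/K + 3*kp"
  define mu where "mu = enn2real (\<integral>\<^sup>+x. ennreal (norm x^4) \<partial>\<nu>)"
  define bb where "bb = \<beta>^2"
  define g2 where "g2 = real CARD('d)"
  define g4 where "g4 = 3 * real CARD('d)^2"
  define R where "R = 2*norm (a 0)^2/K + 2*norm (a 0)^2"
  define B0 where "B0 = (2*R+8*bb*g2)^2/(2*K) + R^2 + 8*bb*g2*R + 2*bb^2*(g2^2+g4)"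
  define Mx where "Mx = max mu (2*B0/K)"
  define \<gamma>0 where "\<gamma>0 = min (min 1 (1/K)) (min (K/(4*(L^2+1))) (K/(32*P+1)))"
  define C where "C = 16*(P+1)*(1+8*Mx)/K"
  have kp: "0 \<le> kp" "\<kappa> \<le> kp" unfolding kp_def by auto
  have Pn: "0 \<le> P" unfolding P_def using kp A1_K by auto
  have mu: "(\<integral>\<^sup>+x. ennreal (norm x^4) \<partial>\<nu>) = ennreal mu" "0 \<le> mu"
    using X0_moment unfolding mu_def by (auto simp: less_top[symmetric] enn2real_nonneg)
  have Mxn: "0 \<le> Mx" unfolding Mx_def using mu by auto
  have M0: "(\<integral>\<^sup>+x. ennreal (norm x^4) \<partial>\<nu>) \<le> ennreal Mx" unfolding mu(1) Mx_def by (intro ennreal_leI) auto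
  have MxB: "2*B0/K \<le> Mx" unfolding Mx_def by auto
  have g0: "0 < \<gamma>0"
  proof -
    have L2: "0 < 4*(L^2+1)" using zero_le_power2[of L] by (simp add: add_nonneg_pos)
    have P2: "0 < 32*P+1" using Pn by linarith
    show ?thesis unfolding \<gamma>0_def using A1_K L2 P2 by auto
  qed
  have Cp: "C > 0" unfolding C_def using Pn Mxn A1_K by (auto intro!: divide_pos_pos mult_pos_pos add_pos_nonneg)
  show ?thesis
  proof (rule exI[of _ "\<gamma>0/2"], intro conjI exI[of _ C] allI impI Cp)
    show "0 < \<gamma>0/2" using g0 by simp
    fix s :: nat and h :: real and k :: nat
    assume s: "1 \<le> s" and hh: "0 < h \<and> h < \<gamma>0/2" and kk: "even k \<and> 2 \<le> k"
    have h: "0 < h" "2*h < \<gamma>0" using hh by auto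
    have g1: "2*h \<le> 1" "2*h \<le> 1/K" "2*h \<le> K/(4*(L^2+1))" "2*h \<le> K/(32*P+1)"
      using h(2) unfolding \<gamma>0_def by auto
    have c1: "2*h \<le> 1" by (rule g1(1))
    have c2: "2*h*K \<le> 1" using g1(2) A1_K by (simp add: field_simps)
    have c3: "2*h*(4*L^2) \<le> K"
    proof -
      have "2*h*(4*(L^2+1)) \<le> K" using g1(3) by (simp add: field_simps add_pos_nonneg)
      moreover have "2*h*(4*L^2) \<le> 2*h*(4*(L^2+1))" using h by (intro mult_left_mono) auto
      ultimately show ?thesis by linarith
    qed
    have c3': "2*h*L^2 \<le> K"
    proof -
      have "2*h*L^2 \<le> 2*h*(4*L^2)" using h by (intro mult_left_mono) auto
      with c3 show ?thesis by linarith
    qed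
    have c4: "8*(2*h)^2*P \<le> K/4"
    proof -
      have "(2*h)^2 \<le> 2*h" using h c1 by (simp add: power2_eq_square mult_left_le_one_le)
      then have "32*(2*h)^2*P \<le> 32*(2*h)*P" using Pn by (intro mult_right_mono) auto
      also have "\<dots> \<le> 32*(K/(32*P+1))*P" using g1(4) Pn by (intro mult_right_mono mult_left_mono) auto
      also have "\<dots> \<le> K"
      proof -
        have "32*(K/(32*P+1))*P = K * (32*P/(32*P+1))" by (simp add: field_simps)
        also have "\<dots> \<le> K * 1" using A1_K Pn by (intro mult_left_mono) auto
        finally show ?thesis by simp
      qed
      finally show ?thesis by simp
    qed
    have s2: "1 \<le> 2 * s" using s by simp
    have lp: "prob_space (Q (2 * s))" "sets (Q (2 * s)) = sets borel" using laws[OF s2] by auto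
    interpret LS a b Q \<nu> \<beta> L K s h
      by (rule LS.intro) (fact beta lp b_meas unbiased[OF s2] A1_lip A1_K A1_diss a_cont X0_law h(1))+
    define rr where "rr = 1 / real s"
    have rr: "0 < rr" "rr \<le> 1" unfolding rr_def using s by auto
    have A3': "(\<integral>\<^sup>+u. ennreal (norm (b x u - a x)^2) \<partial>Q (2 * s)) \<le> ennreal (kp*rr*(1 + norm x^2))" for x
    proof -
      have "\<sigma>2 (2 * s) \<le> \<kappa> / real (2 * s)" by (rule A3_rate[OF s2])
      also have "\<dots> \<le> kp / real (2 * s)" using kp s by (intro divide_right_mono) auto
      also have "\<dots> \<le> kp*rr" unfolding rr_def using kp s by (simp add: field_simps)
      finally have "\<sigma>2 (2 * s) * (1 + norm x^2) \<le> kp*rr*(1 + norm x^2)"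
        by (intro mult_right_mono) auto
      then show ?thesis using A3[OF s2, of x] by (meson ennreal_leI order_trans)
    qed
    have A4': "(\<integral>\<^sup>+u. ennreal (norm (b x u - a x)^4) \<partial>Q (2 * s)) \<le> ennreal (kp*rr^2*(1 + norm x^4))" for x
    proof -
      have "\<sigma>4 (2 * s) \<le> \<kappa> / (real (2 * s))^2" by (rule A4_rate[OF s2])
      also have "\<dots> \<le> kp / (real (2 * s))^2" using kp s by (intro divide_right_mono) auto
      also have "\<dots> \<le> kp*rr^2" unfolding rr_def using kp s by (simp add: field_simps power2_eq_square)
      finally have "\<sigma>4 (2 * s) * (1 + norm x^4) \<le> kp*rr^2*(1 + norm x^4)"
        by (intro mult_right_mono) auto
      then show ?thesis using A4[OF s2, of x] by (meson ennreal_leI order_trans)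
    qed
    have XB: "(\<integral>\<^sup>+\<omega>. ennreal (norm (Xm m \<omega>)^4) \<partial>Om) \<le> ennreal Mx" for m
      using X_bound[OF c1 c2 c3 M0 MxB[unfolded B0_def R_def bb_def g2_def g4_def]] .
    define Md where "Md = 4*(2*h)^2*P*rr^2*(1+8*Mx)/K"
    have YB: "(\<integral>\<^sup>+\<omega>. ennreal (norm (Yd \<delta> m \<omega> - Xm m \<omega>)^4) \<partial>Om) \<le> ennreal Md" for \<delta> m
      unfolding Md_def by (rule Yd_bound[OF c1 c2 c3' c4 kp(1) P_def rr A3' A4' XB Mxn])
    define m where "m = k div 2"
    have eqs: "Xbar_fc \<beta> h b k \<omega> - Xc \<beta> h a k \<omega> = (1/2) *\<^sub>R ((Yd 0 m \<omega> - Xm m \<omega>) + (Yd 1 m \<omega> - Xm m \<omega>))" for \<omega>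
    proof -
      have "Xfcm \<beta> h b k \<omega> = Yd 0 m \<omega>" "Xfcp \<beta> h b k \<omega> = Yd 1 m \<omega>" "Xc \<beta> h a k \<omega> = Xm m \<omega>"
        unfolding Xfcm_def Xfcp_def Xc_def Yd_def Xm_def m_def by (auto split: prod.splits)
      then show ?thesis unfolding Xbar_fc_def by (simp add: algebra_simps)
    qed
    have "(\<integral>\<^sup>+\<omega>. ennreal (norm (Xbar_fc \<beta> h b k \<omega> - Xc \<beta> h a k \<omega>)^4) \<partial>coupled_space \<nu> Q s)
        \<le> (\<integral>\<^sup>+\<omega>. ennreal ((1/2) * norm (Yd 0 m \<omega> - Xm m \<omega>)^4 + (1/2) * norm (Yd 1 m \<omega> - Xm m \<omega>)^4 + 0) \<partial>Om)"
    proof (rule nn_integral_mono)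
      fix \<omega>
      have "norm ((1/2) *\<^sub>R ((Yd 0 m \<omega> - Xm m \<omega>) + (Yd 1 m \<omega> - Xm m \<omega>)))^4
          \<le> (norm (Yd 0 m \<omega> - Xm m \<omega>)^4 + norm (Yd 1 m \<omega> - Xm m \<omega>)^4)/2" by (rule half4)
      also have "\<dots> = (1/2) * norm (Yd 0 m \<omega> - Xm m \<omega>)^4 + (1/2) * norm (Yd 1 m \<omega> - Xm m \<omega>)^4 + 0" by simp
      finally show "ennreal (norm (Xbar_fc \<beta> h b k \<omega> - Xc \<beta> h a k \<omega>)^4)
          \<le> ennreal ((1/2) * norm (Yd 0 m \<omega> - Xm m \<omega>)^4 + (1/2) * norm (Yd 1 m \<omega> - Xm m \<omega>)^4 + 0)"
        unfolding eqs by (rule ennreal_leI)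
    qed
    also have "\<dots> = ennreal (1/2) * (\<integral>\<^sup>+\<omega>. ennreal (norm (Yd 0 m \<omega> - Xm m \<omega>)^4) \<partial>Om)
        + ennreal (1/2) * (\<integral>\<^sup>+\<omega>. ennreal (norm (Yd 1 m \<omega> - Xm m \<omega>)^4) \<partial>Om) + ennreal 0"
    proof (rule nn_lin3g[OF Om_prob])
      show "(\<lambda>\<omega>. norm (Yd 0 m \<omega> - Xm m \<omega>)^4) \<in> borel_measurable Om"
        by (intro meas_Om borel_measurable_power) (rule measurable_compose[OF borel_measurable_diff[OF Yd_meas Xm_meas] borel_measurable_norm])
      show "(\<lambda>\<omega>. norm (Yd 1 m \<omega> - Xm m \<omega>)^4) \<in> borel_measurable Om"
        by (intro meas_Om borel_measurable_power) (rule measurable_compose[OF borel_measurable_diff[OF Yd_meas Xm_meas] borel_measurable_norm])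
      show "\<And>x. 0 \<le> norm (Yd 0 m x - Xm m x)^4" by simp
      show "\<And>x. 0 \<le> norm (Yd 1 m x - Xm m x)^4" by simp
      show "0 \<le> (1/2::real)" "0 \<le> (1/2::real)" by simp_all
      show "0 \<le> (0::real)" by simp
    qed
    also have "\<dots> \<le> ennreal (1/2) * ennreal Md + ennreal (1/2) * ennreal Md + ennreal 0"
      by (intro add_mono mult_left_mono YB order_refl) auto
    also have "\<dots> = ennreal Md"
    proof -
      have "0 \<le> Md" unfolding Md_def using h Pn Mxn A1_K by simp
      then have h2: "0 \<le> 1/2*Md" by simp
      have h1: "0 \<le> (1/2::real)" by simp
      show ?thesis
        unfolding ennreal_mult[OF h1 \<open>0 \<le> Md\<close>, symmetric] ennreal_plus[OF h2 h2, symmetric] by simp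
    qed
    also have "\<dots> \<le> ennreal (C * h^2 / (real s)^2)"
    proof (rule ennreal_leI)
      have "Md = (16*P*(1+8*Mx)/K) * h^2 / (real s)^2" unfolding Md_def rr_def
        by (simp add: field_simps power2_eq_square)
      also have "\<dots> \<le> C * h^2 / (real s)^2" unfolding C_def
        using Pn Mxn A1_K by (intro divide_right_mono mult_right_mono) (auto simp: field_simps)
      finally show "Md \<le> C * h^2 / (real s)^2" .
    qed
    finally show "(\<integral>\<^sup>+\<omega>. ennreal (norm (Xbar_fc \<beta> h b k \<omega> - Xc \<beta> h a k \<omega>)^4) \<partial>coupled_space \<nu> Q s)
        \<le> ennreal (C * h^2 / (real s)^2)" .
  qed
qed


end
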